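(* Let $X\subseteq\mathbb C^2$ be an irreducible curve. (1) $\Sigma_X^\infty$ is one-dimensional if and only if $X$ is a line with direction vector $(i,-1)^\top$ or $(i,1)^\top$; in this case $\Sigma_X^\infty=X$. (2) $\Sigma_X^\infty$ is zero-dimensional if and only if $X=\{(x_1,x_2):(x_1-c_1)^2+(x_2-c_2)^2=r^2\}$ for some $c=(c_1,c_2)\in\mathbb C^2$ and $r\neq0$; in this case $\Sigma_X^\infty=\{c\}$. (3) For all other irreducible curves $X\subseteq\mathbb C^2$, $\Sigma_X^\infty=\emptyset$.
   Context: For $x,y\in\mathbb C^2$, $x\cdot y=x_1y_1+x_2y_2$ (complex bilinear), $i=\sqrt{-1}$. For $x\in X_{\mathrm{reg}}$ (smooth locus), $N_xX$ is the span of gradients at $x$ of generators of the ideal of $X$. The ED correspondence $\mathcal E_X$ is the Zariski closure of $\{(x,u):x\in X_{\mathrm{reg}},u-x\in N_xX\}$, $\mathcal E_X(u)=\{x:(x,u)\in\mathcal E_X\}$, and $\Sigma_X^\infty=\{u:\dim\mathcal E_X(u)\ge1\}$. *)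

theory Defs
  imports "HOL-Analysis.Analysis"
begin

inductive polyfun :: "('a \<Rightarrow> complex) set \<Rightarrow> ('a \<Rightarrow> complex) \<Rightarrow> bool" for C where
  pf_const: "polyfun C (\<lambda>_. c)"
| pf_coord: "f \<in> C \<Longrightarrow> polyfun C f"
| pf_add: "polyfun C f \<Longrightarrow> polyfun C g \<Longrightarrow> polyfun C (\<lambda>x. f x + g x)"
| pf_mult: "polyfun C f \<Longrightarrow> polyfun C g \<Longrightarrow> polyfun C (\<lambda>x. f x * g x)"

definition C2 :: "(complex \<times> complex \<Rightarrow> complex) set" where
  "C2 = {fst, snd}"

definition C4 :: "((complex \<times> complex) \<times> (complex \<times> complex) \<Rightarrow> complex) set" where
  "C4 = {\<lambda>p. fst (fst p), \<lambda>p. snd (fst p), \<lambda>p. fst (snd p), \<lambda>p. snd (snd p)}"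

definition zclosed :: "('a \<Rightarrow> complex) set \<Rightarrow> 'a set \<Rightarrow> bool" where
  "zclosed C S \<longleftrightarrow> (\<exists>F. (\<forall>f\<in>F. polyfun C f) \<and> S = {x. \<forall>f\<in>F. f x = 0})"

definition zcl :: "('a \<Rightarrow> complex) set \<Rightarrow> 'a set \<Rightarrow> 'a set" where
  "zcl C S = \<Inter>{T. zclosed C T \<and> S \<subseteq> T}"

definition zirred :: "('a \<Rightarrow> complex) set \<Rightarrow> 'a set \<Rightarrow> bool" where
  "zirred C S \<longleftrightarrow> zclosed C S \<and> S \<noteq> {} \<and>
     (\<forall>A B. zclosed C A \<and> zclosed C B \<and> S \<subseteq> A \<union> B \<longrightarrow> S \<subseteq> A \<or> S \<subseteq> B)"

definition zdim :: "('a \<Rightarrow> complex) set \<Rightarrow> 'a set \<Rightarrow> int" where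
  "zdim C S = (if S = {} then -1 else int (Sup {n::nat. \<exists>Z::nat \<Rightarrow> 'a set.
      (\<forall>i\<le>n. zirred C (Z i)) \<and> (\<forall>i<n. Z i \<subset> Z (Suc i)) \<and> Z n \<subseteq> zcl C S}))"

definition vanishing :: "('a \<Rightarrow> complex) set \<Rightarrow> 'a set \<Rightarrow> ('a \<Rightarrow> complex) set" where
  "vanishing C S = {f. polyfun C f \<and> (\<forall>x\<in>S. f x = 0)}"

definition grad :: "(complex \<times> complex \<Rightarrow> complex) \<Rightarrow> complex \<times> complex \<Rightarrow> complex \<times> complex" where
  "grad f x = (deriv (\<lambda>t. f (t, snd x)) (fst x), deriv (\<lambda>t. f (fst x, t)) (snd x))"

definition normal_space :: "(complex \<times> complex) set \<Rightarrow> complex \<times> complex \<Rightarrow> (complex \<times> complex) set" where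
  "normal_space X x = {v. \<exists>(cs::complex list) fs. length cs = length fs \<and>
      set fs \<subseteq> vanishing C2 X \<and>
      v = ((\<Sum>i<length fs. cs!i * fst (grad (fs!i) x)),
           (\<Sum>i<length fs. cs!i * snd (grad (fs!i) x)))}"

definition cdim2 :: "(complex \<times> complex) set \<Rightarrow> int" where
  "cdim2 N = (if N \<subseteq> {(0,0)} then 0
      else if (\<exists>v\<in>N. \<exists>w\<in>N. fst v * snd w - snd v * fst w \<noteq> 0) then 2 else 1)"

definition reg :: "(complex \<times> complex) set \<Rightarrow> (complex \<times> complex) set" where
  "reg X = {x\<in>X. cdim2 (normal_space X x) = 2 - zdim C2 X}"

definition ED_corr :: "(complex \<times> complex) set \<Rightarrow> ((complex \<times> complex) \<times> (complex \<times> complex)) set" where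
  "ED_corr X = zcl C4 {(x, u). x \<in> reg X \<and> (fst u - fst x, snd u - snd x) \<in> normal_space X x}"

definition ED_fiber :: "(complex \<times> complex) set \<Rightarrow> complex \<times> complex \<Rightarrow> (complex \<times> complex) set" where
  "ED_fiber X u = {x. (x, u) \<in> ED_corr X}"

definition Sigma_inf :: "(complex \<times> complex) set \<Rightarrow> (complex \<times> complex) set" where
  "Sigma_inf X = {u. zdim C2 (ED_fiber X u) \<ge> 1}"

definition irred_curve :: "(complex \<times> complex) set \<Rightarrow> bool" where
  "irred_curve X \<longleftrightarrow> zirred C2 X \<and> zdim C2 X = 1"

definition line_dir :: "complex \<times> complex \<Rightarrow> (complex \<times> complex) set \<Rightarrow> bool" where
  "line_dir d X \<longleftrightarrow> (\<exists>p. X = {(fst p + t * fst d, snd p + t * snd d) | t. True})"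

definition circle :: "complex \<times> complex \<Rightarrow> complex \<Rightarrow> (complex \<times> complex) set" where
  "circle c r = {x. (fst x - fst c)^2 + (snd x - snd c)^2 = r^2}"

end

theory Submission
  imports Defs "HOL-Computational_Algebra.Computational_Algebra" "HOL-Computational_Algebra.Field_as_Ring" "HOL-Complex_Analysis.Complex_Analysis"
begin


type_synonym bpoly = "complex poly poly"

definition ev :: "bpoly \<Rightarrow> complex \<times> complex \<Rightarrow> complex" where
  "ev P z = poly (poly P [:snd z:]) (fst z)"

definition Dx :: "bpoly \<Rightarrow> bpoly" where "Dx P = map_poly pderiv P"
definition Dy :: "bpoly \<Rightarrow> bpoly" where "Dy P = pderiv P"
definition cst :: "complex \<Rightarrow> bpoly" where "cst c = [:[:c:]:]"
definition X1 :: bpoly where "X1 = [:[:0,1:]:]"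
definition X2 :: bpoly where "X2 = [:0,1:]"

lemma ev_add[simp]: "ev (P + Q) z = ev P z + ev Q z" by (simp add: ev_def)
lemma ev_mult[simp]: "ev (P * Q) z = ev P z * ev Q z" by (simp add: ev_def)
lemma ev_diff[simp]: "ev (P - Q) z = ev P z - ev Q z" by (simp add: ev_def)
lemma ev_minus[simp]: "ev (- P) z = - ev P z" by (simp add: ev_def)
lemma ev_0[simp]: "ev 0 z = 0" by (simp add: ev_def)
lemma ev_1[simp]: "ev 1 z = 1" by (simp add: ev_def)
lemma ev_cst[simp]: "ev (cst c) z = c" by (simp add: ev_def cst_def)
lemma ev_X1[simp]: "ev X1 z = fst z" by (simp add: ev_def X1_def)
lemma ev_X2[simp]: "ev X2 z = snd z" by (simp add: ev_def X2_def)
lemma ev_pow[simp]: "ev (P ^ n) z = ev P z ^ n" by (induct n) auto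
lemma ev_pCons: "ev (pCons c P) z = poly c (fst z) + snd z * ev P z"
  by (simp add: ev_def)
lemma ev_prod_mset: "ev (prod_mset M) z = prod_mset (image_mset (\<lambda>P. ev P z) M)"
  by (induct M) auto

lemma polyfun_poly1: "polyfun C2 (\<lambda>z. poly c (fst z))"
proof (induct c)
  case 0 then show ?case by (simp add: pf_const)
next
  case (pCons a c)
  have "polyfun C2 (\<lambda>z. a + fst z * poly c (fst z))"
    by (intro pf_add pf_mult pf_const pf_coord pCons) (simp add: C2_def)
  then show ?case by simp
qed

lemma polyfun_ev: "polyfun C2 (ev P)"
proof (induct P)
  case 0 then show ?case using pf_const[of C2 0] by (simp add: ev_def[abs_def])
next
  case (pCons c P)
  have s: "polyfun C2 snd" by (rule pf_coord) (simp add: C2_def)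
  have "polyfun C2 (\<lambda>z. poly c (fst z) + snd z * ev P z)"
    by (rule pf_add[OF polyfun_poly1 pf_mult[OF s pCons(2)]])
  then show ?case by (simp add: ev_pCons[abs_def] ev_def[abs_def])
qed

lemma polyfun_ex: "polyfun C2 f \<Longrightarrow> \<exists>P. f = ev P"
proof (induct rule: polyfun.induct)
  case (pf_const c) then show ?case by (intro exI[of _ "cst c"]) auto
next
  case (pf_coord f)
  then have "f = fst \<or> f = snd" by (simp add: C2_def)
  moreover have "ev X1 = fst" "ev X2 = snd" by (auto simp: fun_eq_iff)
  ultimately show ?case by metis
next
  case (pf_add f g) then obtain P Q where "f = ev P" "g = ev Q" by blast
  then show ?case by (intro exI[of _ "P + Q"]) (auto simp: fun_eq_iff)
next
  case (pf_mult f g) then obtain P Q where "f = ev P" "g = ev Q" by blast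
  then show ?case by (intro exI[of _ "P * Q"]) (auto simp: fun_eq_iff)
qed

lemma ev_eq_0: assumes "\<And>z. ev P z = 0" shows "P = 0"
proof -
  have "poly P [:b:] = 0" for b
  proof -
    have "\<forall>a. poly (poly P [:b:]) a = 0" using assms[of "(_, b)"] by (simp add: ev_def)
    then show ?thesis using poly_all_0_iff_0 by blast
  qed
  then have "range (\<lambda>b. [:b:]) \<subseteq> {x. poly P x = 0}" by auto
  moreover have "infinite (range (\<lambda>b::complex. [:b:]))"
    proof
    assume "finite (range (\<lambda>b::complex. [:b:]))"
    from finite_imageD[OF this] have "finite (UNIV::complex set)" by (auto simp: inj_on_def)
    then show False using infinite_UNIV_char_0 by blast
  qed
  ultimately have "infinite {x. poly P x = 0}" using finite_subset by blast
  then show ?thesis using poly_roots_finite by blast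
qed

lemma ev_inj: "(\<And>z. ev P z = ev Q z) \<Longrightarrow> P = Q"
  using ev_eq_0[of "P - Q"] by simp

lemma Dx_pCons: "Dx (pCons c P) = pCons (pderiv c) (Dx P)"
  by (simp add: Dx_def map_poly_pCons)
lemma Dy_pCons: "Dy (pCons c P) = P + pCons 0 (Dy P)"
  by (simp add: Dy_def pderiv_pCons)
lemma ev_fun_pCons: "ev (pCons c P) = (\<lambda>z. poly c (fst z) + snd z * ev P z)"
  by (simp add: ev_pCons fun_eq_iff)

lemma poly1_has_derivative:
  "((\<lambda>z::complex\<times>complex. poly c (fst z)) has_derivative (\<lambda>h. poly (pderiv c) (fst z) * fst h)) (at z)"
proof -
  have "(poly c has_derivative (\<lambda>h. poly (pderiv c) (fst z) * h)) (at (fst z))"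
    using poly_DERIV[of c "fst z"] by (simp add: has_field_derivative_def)
  from has_derivative_compose[OF has_derivative_fst[OF has_derivative_ident] this]
  show ?thesis by simp
qed

lemma ev_has_derivative:
  "(ev P has_derivative (\<lambda>h. ev (Dx P) z * fst h + ev (Dy P) z * snd h)) (at z)"
proof (induct P arbitrary: z)
  case 0 then show ?case by (simp add: Dx_def Dy_def ev_def[abs_def])
next
  case (pCons c P)
  have "((\<lambda>z. poly c (fst z) + snd z * ev P z) has_derivative
     (\<lambda>h. poly (pderiv c) (fst z) * fst h + (snd z * (ev (Dx P) z * fst h + ev (Dy P) z * snd h) + snd h * ev P z))) (at z)"
    by (intro has_derivative_add poly1_has_derivative has_derivative_mult pCons(2)
        has_derivative_snd[OF has_derivative_ident])
  then show ?case unfolding ev_fun_pCons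
    by (rule has_derivative_eq_rhs) (auto simp: fun_eq_iff Dx_pCons Dy_pCons ev_pCons algebra_simps)
qed

lemma ev_chain:
  assumes "(g1 has_field_derivative d1) (at t)" "(g2 has_field_derivative d2) (at t)"
  shows "((\<lambda>t. ev P (g1 t, g2 t)) has_field_derivative
           (ev (Dx P) (g1 t, g2 t) * d1 + ev (Dy P) (g1 t, g2 t) * d2)) (at t)"
proof -
  have "((\<lambda>t. (g1 t, g2 t)) has_derivative (\<lambda>h. (d1 * h, d2 * h))) (at t)"
    using has_derivative_Pair[OF assms[unfolded has_field_derivative_def]] by (simp add: mult.commute)
  from has_derivative_compose[OF this ev_has_derivative]
  show ?thesis unfolding has_field_derivative_def
    by (rule has_derivative_eq_rhs) (auto simp: fun_eq_iff algebra_simps)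
qed

lemma grad_ev: "grad (ev P) z = (ev (Dx P) z, ev (Dy P) z)"
proof -
  have 1: "((\<lambda>t. ev P (t, snd z)) has_field_derivative ev (Dx P) z) (at (fst z))"
    using ev_chain[of "\<lambda>t. t" 1 "fst z" "\<lambda>t. snd z" 0 P] by simp
  have 2: "((\<lambda>t. ev P (fst z, t)) has_field_derivative ev (Dy P) z) (at (snd z))"
    using ev_chain[of "\<lambda>t. fst z" 0 "snd z" "\<lambda>t. t" 1 P] by simp
  show ?thesis unfolding grad_def using DERIV_imp_deriv[OF 1] DERIV_imp_deriv[OF 2] by simp
qed





instantiation fract :: (idom)
  "{unique_euclidean_ring, normalization_euclidean_semiring, normalization_semidom_multiplicative}"
begin
definition [simp]: "normalize_fract = (normalize_field :: 'a fract \<Rightarrow> _)"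
definition [simp]: "unit_factor_fract = (unit_factor_field :: 'a fract \<Rightarrow> _)"
definition [simp]: "modulo_fract = (mod_field :: 'a fract \<Rightarrow> _)"
definition [simp]: "euclidean_size_fract = (euclidean_size_field :: 'a fract \<Rightarrow> _)"
definition [simp]: "division_segment (x :: 'a fract) = 1"
instance
  by standard
    (simp_all add: dvd_field_iff field_split_simps split: if_splits)
end

instantiation fract :: (idom) euclidean_ring_gcd
begin
definition gcd_fract :: "'a fract \<Rightarrow> 'a fract \<Rightarrow> 'a fract" where
  "gcd_fract = Euclidean_Algorithm.gcd"
definition lcm_fract :: "'a fract \<Rightarrow> 'a fract \<Rightarrow> 'a fract" where
  "lcm_fract = Euclidean_Algorithm.lcm"
definition Gcd_fract :: "'a fract set \<Rightarrow> 'a fract" where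
 "Gcd_fract = Euclidean_Algorithm.Gcd"
definition Lcm_fract :: "'a fract set \<Rightarrow> 'a fract" where
 "Lcm_fract = Euclidean_Algorithm.Lcm"
instance by standard (simp_all add: gcd_fract_def lcm_fract_def Gcd_fract_def Lcm_fract_def)
end

instance fract :: (idom) field_gcd ..


lemma ev_smult[simp]: "ev (smult c P) z = poly c (fst z) * ev P z"
  by (simp add: ev_def)

lemma ev_map: "ev Q (a,b) = poly (map_poly (\<lambda>q. poly q a) Q) b"
  by (induct Q) (auto simp: ev_pCons map_poly_pCons)

lemma vert_dvd: assumes "\<And>b. ev Q (a,b) = 0" shows "[:[:-a,1:]:] dvd Q"
proof -
  have "map_poly (\<lambda>q. poly q a) Q = 0" using assms unfolding ev_map using poly_all_0_iff_0 by blast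
  then have "poly (coeff Q n) a = 0" for n
    by (metis coeff_0 coeff_map_poly poly_0)
  then have "[:-a,1:] dvd coeff Q n" for n by (simp add: poly_eq_0_iff_dvd)
  then show ?thesis by (simp add: const_poly_dvd_iff)
qed

lemma fin_lemma:
  assumes "d \<noteq> 0" "\<And>a. poly d a = 0 \<Longrightarrow> map_poly (\<lambda>q. poly q a) G \<noteq> 0"
    "S \<subseteq> {z. poly d (fst z) = 0 \<and> ev G z = 0}"
  shows "finite S"
proof -
  have "S \<subseteq> (\<Union>a\<in>{a. poly d a = 0}. (\<lambda>b. (a,b)) ` {b. poly (map_poly (\<lambda>q. poly q a) G) b = 0})"
    using assms(3) by (force simp: ev_map)
  moreover have "finite (\<Union>a\<in>{a. poly d a = 0}. (\<lambda>b. (a,b)) ` {b. poly (map_poly (\<lambda>q. poly q a) G) b = 0})"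
    using assms(1,2) by (intro finite_UN_I finite_imageI) (auto simp: poly_roots_finite)
  ultimately show ?thesis using finite_subset by blast
qed

lemma clear_denom:
  fixes A :: "complex poly fract poly"
  shows "\<exists>A' d. d \<noteq> 0 \<and> smult (to_fract d) A = fract_poly A'"
proof -
  define x where "x = fract_content A"
  define a where "a = fst (quot_of_fract x)"
  define b where "b = snd (quot_of_fract x)"
  have b0: "b \<noteq> 0" by (simp add: b_def)
  have x: "x = to_fract a / to_fract b" unfolding a_def b_def
    by (metis Fract_conv_to_fract Fract_quot_of_fract)
  have "smult (to_fract b) A = smult (to_fract b) (smult x (fract_poly (primitive_part_fract A)))"
    by (simp add: x_def content_times_primitive_part_fract)
  also have "\<dots> = smult (to_fract a) (fract_poly (primitive_part_fract A))"
    using b0 by (simp add: x)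
  also have "\<dots> = fract_poly (smult a (primitive_part_fract A))" by simp
  finally show ?thesis using b0 by blast
qed

lemma K1:
  fixes f Q :: bpoly
  assumes irr: "irreducible f" and nd: "\<not> f dvd Q"
  shows "finite {z. ev f z = 0 \<and> ev Q z = 0}"
proof (cases "degree f = 0")
  case True
  then obtain c where fc: "f = [:c:]" by (metis degree_eq_zeroE)
  with irr have ic: "irreducible c" by (simp add: irreducible_const_poly_iff)
  then have c0: "c \<noteq> 0" by auto
  show ?thesis
  proof (rule fin_lemma[OF c0])
    fix a assume "poly c a = 0"
    then have "[:-a,1:] dvd c" by (simp add: poly_eq_0_iff_dvd)
    then obtain k where ck: "c = [:-a,1:] * k" by blast
    have "\<not> is_unit [:-a,1::complex:]" by (simp add: is_unit_poly_iff)
    with irreducibleD[OF ic ck] have "is_unit k" by blast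
    show "map_poly (\<lambda>q. poly q a) Q \<noteq> 0"
    proof
      assume "map_poly (\<lambda>q. poly q a) Q = 0"
      then have "[:[:-a,1:]:] dvd Q" by (intro vert_dvd) (simp add: ev_map)
      moreover have "f dvd [:[:-a,1:]:]"
      proof -
        have "f = [:[:-a,1:]:] * [:k:]" using ck fc by simp
        moreover have "is_unit [:k:]" using \<open>is_unit k\<close> by (simp add: is_unit_const_poly_iff)
        ultimately show ?thesis using mult_unit_dvd_iff by (metis dvd_refl)
      qed
      ultimately show False using nd dvd_trans by blast
    qed
  next
    show "{z. ev f z = 0 \<and> ev Q z = 0} \<subseteq> {z. poly c (fst z) = 0 \<and> ev Q z = 0}"
      by (auto simp: fc ev_def)
  qed
next
  case False
  have irrF: "irreducible (fract_poly f)" and cont: "content f = 1"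
    using nonconst_poly_irreducible_iff[OF False] irr by auto
  have "\<not> fract_poly f dvd fract_poly Q" using fract_poly_dvdD[OF _ cont] nd by blast
  moreover have "prime_elem (fract_poly f)" using irrF by (simp add: field_poly_irreducible_imp_prime)
  ultimately obtain A B where AB: "A * fract_poly f + B * fract_poly Q = 1"
    by (metis prime_elem_imp_coprime bezout_coefficients_fst_snd coprime_imp_gcd_eq_1)
  obtain A' dA where A': "dA \<noteq> 0" "smult (to_fract dA) A = fract_poly A'" using clear_denom by blast
  obtain B' dB where B': "dB \<noteq> 0" "smult (to_fract dB) B = fract_poly B'" using clear_denom by blast
  have "fract_poly (smult dB A' * f + smult dA B' * Q) =
        smult (to_fract dA * to_fract dB) (A * fract_poly f + B * fract_poly Q)"
    by (simp add: A'(2)[symmetric] B'(2)[symmetric] algebra_simps smult_add_right)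
  also have "\<dots> = fract_poly [:dA * dB:]" using AB by (simp add: map_poly_pCons one_pCons)
  finally have eq: "smult dB A' * f + smult dA B' * Q = [:dA * dB:]" by (simp only: fract_poly_eq_iff)
  show ?thesis
  proof (rule fin_lemma[of "dA * dB" f])
    show "dA * dB \<noteq> 0" using A'(1) B'(1) by simp
  next
    fix a assume "poly (dA * dB) a = 0"
    show "map_poly (\<lambda>q. poly q a) f \<noteq> 0"
    proof
      assume "map_poly (\<lambda>q. poly q a) f = 0"
      then have "[:[:-a,1:]:] dvd f" by (intro vert_dvd) (simp add: ev_map)
      then have "[:-a,1:] dvd content f" by (simp add: const_poly_dvd_iff_dvd_content)
      then show False using cont by (simp add: is_unit_poly_iff)
    qed
  next
    show "{z. ev f z = 0 \<and> ev Q z = 0} \<subseteq> {z. poly (dA * dB) (fst z) = 0 \<and> ev f z = 0}"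
    proof safe
      fix a b assume "ev f (a,b) = 0" "ev Q (a,b) = 0"
      then have "ev [:dA * dB:] (a,b) = 0" unfolding eq[symmetric] by simp
      then show "poly (dA * dB) (fst (a,b)) = 0" by (simp add: ev_def)
    qed
  qed
qed




definition V :: "bpoly \<Rightarrow> (complex \<times> complex) set" where "V P = {z. ev P z = 0}"

lemma zclosed_iff_vanishing:
  "zclosed C S \<longleftrightarrow> S = {x. \<forall>f\<in>vanishing C S. f x = 0}"
proof
  assume "zclosed C S"
  then obtain F where F: "\<forall>f\<in>F. polyfun C f" "S = {x. \<forall>f\<in>F. f x = 0}" by (auto simp: zclosed_def)
  have "F \<subseteq> vanishing C S" using F by (auto simp: vanishing_def)
  then show "S = {x. \<forall>f\<in>vanishing C S. f x = 0}" using F(2) by (auto simp: vanishing_def)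
next
  assume "S = {x. \<forall>f\<in>vanishing C S. f x = 0}"
  then show "zclosed C S" unfolding zclosed_def by (intro exI[of _ "vanishing C S"]) (auto simp: vanishing_def)
qed

lemma zclosed_Inter: assumes "\<And>T. T \<in> TT \<Longrightarrow> zclosed C T" shows "zclosed C (\<Inter>TT)"
proof -
  have "\<Inter>TT = {x. \<forall>f\<in>vanishing C (\<Inter>TT). f x = 0}"
  proof safe
    fix x T assume x: "\<forall>f\<in>vanishing C (\<Inter>TT). f x = 0" and T: "T \<in> TT"
    have "T = {x. \<forall>f\<in>vanishing C T. f x = 0}" using assms[OF T] unfolding zclosed_iff_vanishing .
    moreover have "vanishing C T \<subseteq> vanishing C (\<Inter>TT)" using T by (auto simp: vanishing_def)
    ultimately show "x \<in> T" using x by blast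
  qed (auto simp: vanishing_def)
  then show ?thesis using zclosed_iff_vanishing by blast
qed

lemma zclosed_Int: assumes "zclosed C A" "zclosed C B" shows "zclosed C (A \<inter> B)"
proof -
  have "\<And>T. T \<in> {A,B} \<Longrightarrow> zclosed C T" using assms by blast
  then have "zclosed C (\<Inter>{A,B})" by (rule zclosed_Inter)
  moreover have "\<Inter>{A,B} = A \<inter> B" by blast
  ultimately show ?thesis by simp
qed

lemma zclosed_Un: assumes "zclosed C A" "zclosed C B" shows "zclosed C (A \<union> B)"
proof -
  obtain F where F: "\<forall>f\<in>F. polyfun C f" "A = {x. \<forall>f\<in>F. f x = 0}" using assms(1) by (auto simp: zclosed_def)
  obtain G where G: "\<forall>f\<in>G. polyfun C f" "B = {x. \<forall>f\<in>G. f x = 0}" using assms(2) by (auto simp: zclosed_def)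
  define H where "H = {h. \<exists>f\<in>F. \<exists>g\<in>G. h = (\<lambda>x. f x * g x)}"
  have "\<forall>h\<in>H. polyfun C h" using F G by (auto simp: H_def intro: pf_mult)
  moreover have "A \<union> B = {x. \<forall>h\<in>H. h x = 0}"
  proof safe
    fix x h assume "x \<in> A" "h \<in> H"
    then show "h x = 0" using F(2) by (auto simp: H_def)
  next
    fix x h assume "x \<in> B" "h \<in> H"
    then show "h x = 0" using G(2) by (auto simp: H_def)
  next
    fix x assume x: "\<forall>h\<in>H. h x = 0" "x \<notin> B"
    then obtain g where g: "g \<in> G" "g x \<noteq> 0" using G(2) by auto
    show "x \<in> A" unfolding F(2)
    proof safe
      fix f assume "f \<in> F"
      then have "(\<lambda>x. f x * g x) \<in> H" using g(1) by (auto simp: H_def)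
      then show "f x = 0" using x(1) g(2) by fastforce
    qed
  qed
  ultimately show ?thesis unfolding zclosed_def by blast
qed

lemma zclosed_UNIV: "zclosed C UNIV" unfolding zclosed_def by (intro exI[of _ "{}"]) auto
lemma zclosed_empty: "zclosed C {}" unfolding zclosed_def
  by (intro exI[of _ "{\<lambda>_. 1}"]) (auto intro: pf_const)

lemma zclosed_zero_set: "polyfun C f \<Longrightarrow> zclosed C {x. f x = 0}"
  unfolding zclosed_def by (intro exI[of _ "{f}"]) auto

lemma zclosed_V: "zclosed C2 (V P)"
  unfolding V_def by (rule zclosed_zero_set[OF polyfun_ev])

lemma polyfun_fst: "polyfun C2 fst" by (rule pf_coord) (simp add: C2_def)
lemma polyfun_snd: "polyfun C2 snd" by (rule pf_coord) (simp add: C2_def)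
lemma pf_diff: "polyfun C f \<Longrightarrow> polyfun C g \<Longrightarrow> polyfun C (\<lambda>x. f x - g x)"
proof -
  assume "polyfun C f" "polyfun C g"
  then have "polyfun C (\<lambda>x. f x + (-1) * g x)" by (intro pf_add pf_mult pf_const)
  then show ?thesis by simp
qed
lemma pf_pow2: "polyfun C f \<Longrightarrow> polyfun C (\<lambda>x. (f x)^2)"
  using pf_mult[of C f f] by (simp add: power2_eq_square)

lemma zclosed_singleton: "zclosed C2 {p}"
proof -
  have "{p} = {z. fst z - fst p = 0} \<inter> {z. snd z - snd p = 0}" by (auto simp: prod_eq_iff)
  moreover have "zclosed C2 {z. fst z - fst p = 0}"
    by (rule zclosed_zero_set[OF pf_diff[OF polyfun_fst pf_const]])
  moreover have "zclosed C2 {z. snd z - snd p = 0}"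
    by (rule zclosed_zero_set[OF pf_diff[OF polyfun_snd pf_const]])
  ultimately show ?thesis using zclosed_Int by metis
qed

lemma zclosed_finite: "finite S \<Longrightarrow> zclosed C2 S"
proof (induct rule: finite_induct)
  case empty then show ?case by (rule zclosed_empty)
next
  case (insert x F)
  have "insert x F = {x} \<union> F" by auto
  then show ?case using zclosed_Un[OF zclosed_singleton insert(3)] by simp
qed

lemma zcl_closed: "zclosed C S \<Longrightarrow> zcl C S = S"
  unfolding zcl_def by auto

lemma zcl_sub: "S \<subseteq> zcl C S" unfolding zcl_def by auto
lemma zcl_zclosed: "zclosed C (zcl C S)" unfolding zcl_def by (rule zclosed_Inter) auto
lemma zcl_least: "zclosed C T \<Longrightarrow> S \<subseteq> T \<Longrightarrow> zcl C S \<subseteq> T" unfolding zcl_def by auto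

lemma zirred_finite: assumes "zirred C2 X" "finite X" shows "\<exists>p. X = {p}"
proof -
  obtain p where p: "p \<in> X" using assms(1) by (auto simp: zirred_def)
  have "X \<subseteq> {p} \<union> (X - {p})" by auto
  moreover have "zclosed C2 {p}" "zclosed C2 (X - {p})" using assms(2) by (auto intro: zclosed_singleton zclosed_finite)
  ultimately have "X \<subseteq> {p} \<or> X \<subseteq> X - {p}" using assms(1) unfolding zirred_def by blast
  then show ?thesis using p by blast
qed

lemma zirred_singleton: "zirred C2 {p}"
  unfolding zirred_def using zclosed_singleton by auto

lemma zirred_subset_prod:
  assumes "zirred C2 X" "X \<subseteq> V (prod_mset M)"
  shows "\<exists>P\<in>#M. X \<subseteq> V P"
  using assms(2)
proof (induct M)
  case empty then show ?case using assms(1) by (auto simp: V_def zirred_def)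
next
  case (add P M)
  have "V (prod_mset (add_mset P M)) = V P \<union> V (prod_mset M)" by (auto simp: V_def)
  then have "X \<subseteq> V P \<union> V (prod_mset M)" using add(2) by simp
  then have "X \<subseteq> V P \<or> X \<subseteq> V (prod_mset M)" using assms(1) zclosed_V unfolding zirred_def by blast
  then show ?case using add(1) by auto
qed

lemma unit_ev_nonzero: assumes "is_unit (u::bpoly)" shows "ev u z \<noteq> 0"
proof -
  obtain v where "1 = u * v" using assms by (auto elim: dvdE)
  then have "1 = ev u z * ev v z" by (metis ev_1 ev_mult)
  then show ?thesis by auto
qed

lemma ev_normalize_0: "ev (normalize P) z = 0 \<longleftrightarrow> ev P z = 0"
proof (cases "P = 0")
  case False
  have "ev P z = ev (unit_factor P) z * ev (normalize P) z"
    by (metis ev_mult unit_factor_mult_normalize)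
  moreover have "ev (unit_factor P) z \<noteq> 0" using False by (intro unit_ev_nonzero) simp
  ultimately show ?thesis by simp
qed simp

lemma K2:
  assumes irr: "zirred C2 X" and nU: "X \<noteq> UNIV" and inf: "infinite X"
  shows "\<exists>f. irreducible f \<and> X = V f"
proof -
  obtain F where F: "\<forall>f\<in>F. polyfun C2 f" "X = {x. \<forall>f\<in>F. f x = 0}" using irr by (auto simp: zirred_def zclosed_def)
  obtain g z0 where g: "g \<in> F" "g z0 \<noteq> 0" using nU F(2) by auto
  obtain P where P: "g = ev P" using polyfun_ex F(1) g(1) by blast
  have P0: "P \<noteq> 0" using g P by auto
  have "X \<subseteq> V (prod_mset (prime_factorization P))"
  proof
    fix x assume "x \<in> X"
    then have "ev P x = 0" using F(2) g(1) P by auto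
    then have "ev (normalize (prod_mset (prime_factorization P))) x = 0"
      using P0 by (simp add: prod_mset_prime_factorization_weak ev_normalize_0)
    then show "x \<in> V (prod_mset (prime_factorization P))"
      by (simp add: V_def ev_normalize_0)
  qed
  then obtain p where p: "p \<in># prime_factorization P" "X \<subseteq> V p" using zirred_subset_prod[OF irr] by blast
  have ip: "irreducible p" using p(1) by (auto dest!: in_prime_factors_imp_prime intro: prime_elem_imp_irreducible)
  have "X = V p"
  proof (rule ccontr)
    assume "X \<noteq> V p"
    then obtain z1 where z1: "z1 \<in> V p" "z1 \<notin> X" using p(2) by auto
    then obtain h where h: "h \<in> F" "h z1 \<noteq> 0" using F(2) by auto
    obtain Q where Q: "h = ev Q" using polyfun_ex F(1) h(1) by blast
    have "\<not> p dvd Q"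
    proof
      assume "p dvd Q" then obtain k where "Q = p * k" by blast
      then show False using z1(1) h(2) Q by (simp add: V_def)
    qed
    from K1[OF ip this] have "finite {z. ev p z = 0 \<and> ev Q z = 0}" .
    moreover have "X \<subseteq> {z. ev p z = 0 \<and> ev Q z = 0}" using p(2) F(2) h(1) Q by (auto simp: V_def)
    ultimately show False using inf finite_subset by blast
  qed
  then show ?thesis using ip by blast
qed

lemma K3:
  assumes "irreducible f" "irreducible g" "infinite (V f)" "V f \<subseteq> V g"
  shows "V f = V g"
proof -
  have "g dvd f"
  proof (rule ccontr)
    assume "\<not> g dvd f"
    from K1[OF assms(2) this] have "finite {z. ev g z = 0 \<and> ev f z = 0}" .
    moreover have "V f \<subseteq> {z. ev g z = 0 \<and> ev f z = 0}" using assms(4) by (auto simp: V_def)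
    ultimately show False using assms(3) finite_subset by blast
  qed
  then obtain k where k: "f = g * k" by blast
  have "is_unit k" using irreducibleD[OF assms(1) k] irreducible_not_unit[OF assms(2)] by blast
  then show ?thesis using k unit_ev_nonzero[of k] by (auto simp: V_def)
qed

lemma irred_infinite_nonpoint:
  assumes "zirred C2 Y" "Z \<subset> Y" "Z \<noteq> {}"
  shows "infinite Y"
  using zirred_finite[OF assms(1)] assms(2,3) by auto

lemma chain_bound:
  assumes "\<forall>i\<le>n. zirred C2 (Z i)" "\<forall>i<n. Z i \<subset> Z (Suc i)"
  shows "n \<le> 2"
proof (rule ccontr)
  assume "\<not> n \<le> 2"
  then have n: "3 \<le> n" by simp
  have z: "zirred C2 (Z i)" if "i \<le> 3" for i using assms(1) n that by auto
  have s: "Z i \<subset> Z (Suc i)" if "i < 3" for i using assms(2) n that by auto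
  have s01: "Z 0 \<subset> Z 1" and s12: "Z 1 \<subset> Z 2" and s23: "Z 2 \<subset> Z 3"
    using s[of 0] s[of 1] s[of 2] by (simp_all add: numeral_2_eq_2 numeral_3_eq_3)
  have ne0: "Z 0 \<noteq> {}" using z[of 0] by (auto simp: zirred_def)
  have inf1: "infinite (Z 1)" using irred_infinite_nonpoint[OF z[of 1] s01 ne0] by simp
  have inf2: "infinite (Z 2)" using inf1 s12 finite_subset by blast
  have nU1: "Z 1 \<noteq> UNIV" using s12 s23 by auto
  have nU2: "Z 2 \<noteq> UNIV" using s23 by auto
  obtain f where f: "irreducible f" "Z 1 = V f" using K2[OF z[of 1] nU1 inf1] by auto
  obtain g where g: "irreducible g" "Z 2 = V g" using K2[OF z[of 2] nU2 inf2] by auto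
  have "V f = V g" using K3[OF f(1) g(1)] inf1 s12 f(2) g(2) by auto
  then show False using s12 f(2) g(2) by auto
qed




definition chains :: "(complex \<times> complex) set \<Rightarrow> nat set" where
  "chains S = {n. \<exists>Z::nat \<Rightarrow> (complex \<times> complex) set.
      (\<forall>i\<le>n. zirred C2 (Z i)) \<and> (\<forall>i<n. Z i \<subset> Z (Suc i)) \<and> Z n \<subseteq> zcl C2 S}"

lemma zdim_chains: "S \<noteq> {} \<Longrightarrow> zdim C2 S = int (Sup (chains S))"
  unfolding zdim_def chains_def by simp

lemma zdim_empty: "zdim C2 {} = -1" unfolding zdim_def by simp

lemma chains_le2: "n \<in> chains S \<Longrightarrow> n \<le> 2"
  unfolding chains_def using chain_bound by blast

lemma chains_finite: "finite (chains S)"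
proof -
  have "chains S \<subseteq> {..2}" using chains_le2 by auto
  from finite_subset[OF this] show ?thesis by simp
qed

lemma chains_0: assumes "S \<noteq> {}" shows "0 \<in> chains S"
proof -
  obtain p where "p \<in> S" using assms by auto
  then have "{p} \<subseteq> zcl C2 S" using zcl_sub[of S C2] by auto
  then show ?thesis unfolding chains_def
    by (intro CollectI exI[of _ "\<lambda>_. {p}"]) (auto simp: zirred_singleton)
qed

lemma chain_mono:
  assumes "\<forall>i<n. Z i \<subset> Z (Suc i)" "i \<le> j" "j \<le> n"
  shows "Z i \<subseteq> Z j"
  using assms(2,3)
proof (induct j)
  case 0 then show ?case by simp
next
  case (Suc j)
  show ?case
  proof (cases "i = Suc j")
    case False
    then have "Z i \<subseteq> Z j" using Suc by simp
    moreover have "Z j \<subset> Z (Suc j)" using assms(1) Suc(3) by simp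
    ultimately show ?thesis by blast
  qed simp
qed

lemma chains_down: assumes "n \<in> chains S" "m \<le> n" shows "m \<in> chains S"
proof -
  obtain Z where Z: "\<forall>i\<le>n. zirred C2 (Z i)" "\<forall>i<n. Z i \<subset> Z (Suc i)" "Z n \<subseteq> zcl C2 S"
    using assms(1) unfolding chains_def by blast
  have "Z m \<subseteq> Z n" using chain_mono[OF Z(2) assms(2)] by simp
  then show ?thesis unfolding chains_def using Z assms(2)
    by (intro CollectI exI[of _ Z]) auto
qed

lemma Sup_chains: assumes "S \<noteq> {}" shows "Sup (chains S) \<in> chains S" "\<And>n. n \<in> chains S \<Longrightarrow> n \<le> Sup (chains S)"
proof -
  have ne: "chains S \<noteq> {}" using chains_0[OF assms] by blast
  show "Sup (chains S) \<in> chains S" using ne chains_finite by (simp add: Sup_nat_def)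
  fix n assume "n \<in> chains S" then show "n \<le> Sup (chains S)"
    using ne chains_finite by (simp add: Sup_nat_def)
qed

lemma zdim_ge1: assumes "zdim C2 S \<ge> 1" shows "1 \<in> chains S"
proof -
  have S: "S \<noteq> {}" using assms by (auto simp: zdim_empty)
  then have "Sup (chains S) \<ge> 1" using assms zdim_chains by simp
  then show ?thesis using Sup_chains(1)[OF S] chains_down by blast
qed

lemma zdim_eq1: assumes "zdim C2 S = 1" shows "2 \<notin> chains S"
proof
  assume "2 \<in> chains S"
  have S: "S \<noteq> {}" using assms by (auto simp: zdim_empty)
  have "2 \<le> Sup (chains S)" using Sup_chains(2)[OF S \<open>2 \<in> chains S\<close>] .
  then show False using assms zdim_chains[OF S] by simp
qed

lemma zdim_ge1_infinite: assumes "zdim C2 S \<ge> 1" shows "infinite (zcl C2 S)"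
proof -
  obtain Z where Z: "\<forall>i\<le>1. zirred C2 (Z i)" "\<forall>i<1. Z i \<subset> Z (Suc i)" "Z 1 \<subseteq> zcl C2 S"
    using zdim_ge1[OF assms] unfolding chains_def by blast
  have "Z 0 \<noteq> {}" using Z(1) by (auto simp: zirred_def)
  then have "infinite (Z 1)" using irred_infinite_nonpoint[of "Z 1" "Z 0"] Z by simp
  then show ?thesis using Z(3) finite_subset by blast
qed

lemma zdim_finite: assumes "finite S" "S \<noteq> {}" shows "zdim C2 S = 0"
proof -
  have "1 \<notin> chains S"
  proof
    assume "1 \<in> chains S"
    have "S \<noteq> {}" by fact
    have "zdim C2 S \<ge> 1" using Sup_chains(2)[OF assms(2) \<open>1 \<in> chains S\<close>] zdim_chains[OF assms(2)] by simp
    from zdim_ge1_infinite[OF this] show False using zcl_closed[OF zclosed_finite[OF assms(1)]] assms(1) by simp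
  qed
  then have "chains S \<subseteq> {0}" using chains_down by (metis Suc_leI not_gr0 One_nat_def singleton_iff subsetI)
  then have "Sup (chains S) = 0" using Sup_chains(1)[OF assms(2)] by auto
  then show ?thesis using zdim_chains[OF assms(2)] by simp
qed

lemma zdim_lt1_finite: "finite S \<Longrightarrow> zdim C2 S < 1"
  by (cases "S = {}") (auto simp: zdim_empty zdim_finite)

subsection \<open>Curves given by parametrizations\<close>

definition curve_prop :: "(complex \<times> complex) set \<Rightarrow> bool" where
  "curve_prop Y \<longleftrightarrow> (\<forall>f. polyfun C2 f \<longrightarrow> Y \<subseteq> {z. f z = 0} \<or> finite (Y \<inter> {z. f z = 0}))"

lemma curve_irred:
  assumes cl: "zclosed C2 Y" and inf: "infinite Y" and cp: "curve_prop Y"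
  shows "zirred C2 Y"
  unfolding zirred_def
proof (intro conjI allI impI)
  show "zclosed C2 Y" "Y \<noteq> {}" using cl inf by auto
  fix A B assume AB: "zclosed C2 A \<and> zclosed C2 B \<and> Y \<subseteq> A \<union> B"
  have fin: "finite (Y \<inter> T)" if T: "zclosed C2 T" "\<not> Y \<subseteq> T" for T
  proof -
    obtain F where F: "\<forall>f\<in>F. polyfun C2 f" "T = {x. \<forall>f\<in>F. f x = 0}" using T(1) by (auto simp: zclosed_def)
    obtain y f where yf: "y \<in> Y" "f \<in> F" "f y \<noteq> 0" using T(2) F(2) by auto
    have "\<not> Y \<subseteq> {z. f z = 0}" using yf by auto
    then have "finite (Y \<inter> {z. f z = 0})" using cp F(1) yf(2) unfolding curve_prop_def by blast
    moreover have "Y \<inter> T \<subseteq> Y \<inter> {z. f z = 0}" using F(2) yf(2) by auto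
    ultimately show ?thesis using finite_subset by blast
  qed
  show "Y \<subseteq> A \<or> Y \<subseteq> B"
  proof (rule ccontr)
    assume "\<not> (Y \<subseteq> A \<or> Y \<subseteq> B)"
    then have "finite (Y \<inter> A)" "finite (Y \<inter> B)" using fin AB by auto
    moreover have "Y = (Y \<inter> A) \<union> (Y \<inter> B)" using AB by auto
    ultimately show False using inf by (metis finite_UnI)
  qed
qed

lemma curve_eq:
  assumes cl: "zclosed C2 X" and inf: "infinite X" and sub: "X \<subseteq> Y" and cp: "curve_prop Y"
  shows "X = Y"
proof (rule ccontr)
  assume "X \<noteq> Y"
  then obtain y where y: "y \<in> Y" "y \<notin> X" using sub by auto
  obtain F where F: "\<forall>f\<in>F. polyfun C2 f" "X = {x. \<forall>f\<in>F. f x = 0}" using cl by (auto simp: zclosed_def)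
  obtain f where f: "f \<in> F" "f y \<noteq> 0" using y F(2) by auto
  have "finite (Y \<inter> {z. f z = 0})" using cp F(1) f y unfolding curve_prop_def by blast
  moreover have "X \<subseteq> Y \<inter> {z. f z = 0}" using sub F(2) f(1) by auto
  ultimately show False using inf finite_subset by blast
qed

lemma laurent_param:
  assumes c1: "\<exists>q N. \<forall>s\<in>A. fst (\<gamma> s) = poly q s / s^N"
      and c2: "\<exists>q N. \<forall>s\<in>A. snd (\<gamma> s) = poly q s / s^N"
      and pf: "polyfun C2 f" and A0: "0 \<notin> A"
  shows "\<exists>q N. \<forall>s\<in>A. f (\<gamma> s) = poly q s / s^N"
  using pf
proof (induct rule: polyfun.induct)
  case (pf_const c) then show ?case by (intro exI[of _ "[:c:]"] exI[of _ 0]) simp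
next
  case (pf_coord f) then show ?case using c1 c2 by (auto simp: C2_def)
next
  case (pf_add f g)
  then obtain q1 N1 q2 N2 where q: "\<forall>s\<in>A. f (\<gamma> s) = poly q1 s / s^N1" "\<forall>s\<in>A. g (\<gamma> s) = poly q2 s / s^N2"
    by blast
  show ?case
  proof (intro exI[of _ "q1 * monom 1 N2 + q2 * monom 1 N1"] exI[of _ "N1 + N2"] ballI)
    fix s assume s: "s \<in> A"
    show "f (\<gamma> s) + g (\<gamma> s) = poly (q1 * monom 1 N2 + q2 * monom 1 N1) s / s ^ (N1 + N2)"
    proof (cases "s = 0")
      case False
      have n1: "s^N1 \<noteq> 0" and n2: "s^N2 \<noteq> 0" using False by auto
      have "f (\<gamma> s) + g (\<gamma> s) = poly q1 s / s^N1 + poly q2 s / s^N2" using q s by simp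
      also have "\<dots> = (poly q1 s * s^N2 + poly q2 s * s^N1) / (s^N1 * s^N2)"
        by (rule add_frac_eq[OF n1 n2])
      finally show ?thesis by (simp add: poly_monom power_add)
    next
      case True then show ?thesis using s A0 by simp
    qed
  qed
next
  case (pf_mult f g)
  then obtain q1 N1 q2 N2 where q: "\<forall>s\<in>A. f (\<gamma> s) = poly q1 s / s^N1" "\<forall>s\<in>A. g (\<gamma> s) = poly q2 s / s^N2"
    by blast
  show ?case
    by (intro exI[of _ "q1 * q2"] exI[of _ "N1 + N2"] ballI) (simp add: q power_add)
qed

lemma poly_param:
  assumes c1: "\<exists>q. \<forall>s. fst (\<gamma> s) = poly q s"
      and c2: "\<exists>q. \<forall>s. snd (\<gamma> s) = poly q s"
      and pf: "polyfun C2 f"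
  shows "\<exists>q. \<forall>s. f (\<gamma> s) = poly q s"
  using pf
proof (induct rule: polyfun.induct)
  case (pf_const c) then show ?case by (intro exI[of _ "[:c:]"]) simp
next
  case (pf_coord f) then show ?case using c1 c2 by (auto simp: C2_def)
next
  case (pf_add f g)
  then obtain q1 q2 where q: "\<forall>s. f (\<gamma> s) = poly q1 s" "\<forall>s. g (\<gamma> s) = poly q2 s" by blast
  show ?case by (intro exI[of _ "q1 + q2"]) (simp add: q)
next
  case (pf_mult f g)
  then obtain q1 q2 where q: "\<forall>s. f (\<gamma> s) = poly q1 s" "\<forall>s. g (\<gamma> s) = poly q2 s" by blast
  show ?case by (intro exI[of _ "q1 * q2"]) (simp add: q)
qed

lemma param_curve_prop:
  assumes H: "\<And>f. polyfun C2 f \<Longrightarrow> \<exists>q N. \<forall>s\<in>A. f (\<gamma> s) = poly q s / s^N"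
  shows "curve_prop (\<gamma> ` A)"
  unfolding curve_prop_def
proof (intro allI impI)
  fix f assume "polyfun C2 f"
  then obtain q N where q: "\<forall>s\<in>A. f (\<gamma> s) = poly q s / s^N" using H by blast
  show "\<gamma> ` A \<subseteq> {z. f z = 0} \<or> finite (\<gamma> ` A \<inter> {z. f z = 0})"
  proof (cases "q = 0")
    case True then show ?thesis using q by auto
  next
    case False
    have "\<gamma> ` A \<inter> {z. f z = 0} \<subseteq> \<gamma> ` ({s. poly q s = 0} \<union> {0})" using q by auto
    moreover have "finite ({s. poly q s = 0} \<union> {0})" using False poly_roots_finite by auto
    ultimately show ?thesis using finite_subset by blast
  qed
qed

definition lineset :: "complex \<times> complex \<Rightarrow> complex \<times> complex \<Rightarrow> (complex \<times> complex) set" where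
  "lineset p d = {(fst p + t * fst d, snd p + t * snd d) | t. True}"

lemma line_dir_iff: "line_dir d X \<longleftrightarrow> (\<exists>p. X = lineset p d)"
  unfolding line_dir_def lineset_def by simp

lemma lineset_image: "lineset p d = (\<lambda>t. (fst p + t * fst d, snd p + t * snd d)) ` UNIV"
  unfolding lineset_def by auto

lemma lineset_curve_prop: "curve_prop (lineset p d)"
  unfolding lineset_image
proof (rule param_curve_prop)
  fix f :: "complex \<times> complex \<Rightarrow> complex" assume "polyfun C2 f"
  have "\<exists>q. \<forall>s. f (fst p + s * fst d, snd p + s * snd d) = poly q s"
  proof (rule poly_param[where \<gamma>="\<lambda>t. (fst p + t * fst d, snd p + t * snd d)", simplified, OF _ _ \<open>polyfun C2 f\<close>])
    show "\<exists>q. \<forall>s. fst p + s * fst d = poly q s"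
      by (intro exI[of _ "[:fst p, fst d:]"] allI) (simp add: algebra_simps)
    show "\<exists>q. \<forall>s. snd p + s * snd d = poly q s"
      by (intro exI[of _ "[:snd p, snd d:]"] allI) (simp add: algebra_simps)
  qed
  then have "\<exists>q N. \<forall>s\<in>UNIV. f (fst p + s * fst d, snd p + s * snd d) = poly q s / s^N"
    by (metis power_0 div_by_1)
  then show "\<exists>q N. \<forall>s\<in>UNIV. f (fst p + s * fst d, snd p + s * snd d) = poly q s / s^N" .
qed

lemma lineset_infinite: assumes "d \<noteq> 0" shows "infinite (lineset p d)"
proof
  assume "finite (lineset p d)"
  then have "finite (UNIV :: complex set)" unfolding lineset_image
    using assms by (auto dest!: finite_imageD simp: inj_on_def prod_eq_iff)
  then show False using infinite_UNIV_char_0 by blast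
qed

lemma lineset_eq: assumes "d \<noteq> 0"
  shows "lineset p d = {z. snd d * (fst z - fst p) - fst d * (snd z - snd p) = 0}"
proof safe
  fix a b assume h: "snd d * (fst (a, b) - fst p) - fst d * (snd (a, b) - snd p) = 0"
  show "(a, b) \<in> lineset p d"
  proof (cases "fst d = 0")
    case True
    then have "snd d \<noteq> 0" using assms by (auto simp: prod_eq_iff)
    then show ?thesis using h True unfolding lineset_def
      by (intro CollectI exI[of _ "(b - snd p) / snd d"]) (auto simp: field_simps)
  next
    case False
    then show ?thesis using h unfolding lineset_def
      by (intro CollectI exI[of _ "(a - fst p) / fst d"]) (auto simp: field_simps)
  qed
qed (auto simp: lineset_def algebra_simps)

lemma lineset_closed: "d \<noteq> 0 \<Longrightarrow> zclosed C2 (lineset p d)"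
  unfolding lineset_eq
  by (intro zclosed_zero_set pf_diff pf_mult pf_const polyfun_fst polyfun_snd)

lemma lineset_irred: "d \<noteq> 0 \<Longrightarrow> zirred C2 (lineset p d)"
  by (intro curve_irred lineset_closed lineset_infinite lineset_curve_prop)

definition circ_par :: "complex \<times> complex \<Rightarrow> complex \<Rightarrow> complex \<Rightarrow> complex \<times> complex" where
  "circ_par c r s = (fst c + (s + r^2 / s) / 2, snd c + (s - r^2 / s) / (2 * \<i>))"

lemma circ_identity: "((s + w)/2)^2 + ((s - w)/(2*\<i>))^2 = (s * w::complex)"
proof -
  have "(2*\<i>)^2 = (-4::complex)" by (simp add: power2_eq_square)
  then have "((s - w)/(2*\<i>))^2 = - ((s-w)^2/4)" by (simp add: power_divide power_mult_distrib)
  then show ?thesis by (simp add: power_divide power2_eq_square field_simps)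
qed

lemma circle_image: assumes "r \<noteq> 0" shows "circle c r = circ_par c r ` (-{0})"
proof
  show "circle c r \<subseteq> circ_par c r ` (-{0})"
  proof
    fix z assume "z \<in> circle c r"
    then obtain a b where ab: "z = (a, b)" "(a, b) \<in> circle c r" by (cases z) auto
    then have h: "(a - fst c)^2 + (b - snd c)^2 = r^2" by (simp add: circle_def)
    define s where "s = (a - fst c) + \<i> * (b - snd c)"
    have prod: "s * ((a - fst c) - \<i> * (b - snd c)) = r^2" using h
      by (simp add: s_def algebra_simps power2_eq_square)
    have s0: "s \<noteq> 0" using prod assms by auto
    have rs: "r^2 / s = (a - fst c) - \<i> * (b - snd c)" using prod s0
      by (simp add: divide_eq_eq mult.commute)
    have "circ_par c r s = (a, b)" unfolding circ_par_def rs by (simp add: s_def algebra_simps)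
    then show "z \<in> circ_par c r ` (-{0})" using s0 ab(1) by (metis ComplI imageI singletonD)
  qed
next
  show "circ_par c r ` (-{0}) \<subseteq> circle c r"
  proof (rule image_subsetI)
    fix s :: complex assume "s \<in> - {0}"
    then have s0: "s \<noteq> 0" by auto
    show "circ_par c r s \<in> circle c r" unfolding circle_def circ_par_def
      using s0 circ_identity[of s "r^2/s"] by simp
  qed
qed

lemma circ_par_inj: "inj_on (circ_par c r) (-{0})"
proof (rule inj_onI)
  fix s t assume "s \<in> - {0}" "t \<in> - {0}" "circ_par c r s = circ_par c r t"
  then have "(s + r^2/s)/2 = (t + r^2/t)/2" "(s - r^2/s)/(2*\<i>) = (t - r^2/t)/(2*\<i>)"
    by (auto simp: circ_par_def)
  then have "(s + r^2/s) = (t + r^2/t)" "(s - r^2/s) = (t - r^2/t)" by (auto simp: field_simps)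
  then have "(s + r^2/s) + (s - r^2/s) = (t + r^2/t) + (t - r^2/t)" by simp
  then show "s = t" by simp
qed

lemma circle_infinite: assumes "r \<noteq> 0" shows "infinite (circle c r)"
proof
  assume "finite (circle c r)"
  then have "finite (-{0::complex})" unfolding circle_image[OF assms] using finite_imageD circ_par_inj by blast
  then have "finite (-{0::complex} \<union> {0})" by simp
  moreover have "-{0::complex} \<union> {0} = UNIV" by auto
  ultimately show False using infinite_UNIV_char_0 by metis
qed

lemma circle_curve_prop: assumes "r \<noteq> 0" shows "curve_prop (circle c r)"
  unfolding circle_image[OF assms]
proof (rule param_curve_prop)
  fix f :: "complex \<times> complex \<Rightarrow> complex" assume pf: "polyfun C2 f"
  show "\<exists>q N. \<forall>s\<in>-{0}. f (circ_par c r s) = poly q s / s^N"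
  proof (rule laurent_param[OF _ _ pf, of "-{0}"])
    show "\<exists>q N. \<forall>s\<in>-{0}. fst (circ_par c r s) = poly q s / s^N"
    proof (intro exI[of _ "[:r^2/2, fst c, 1/2:]"] exI[of _ 1] ballI)
      fix s :: complex assume "s \<in> -{0}" then have s: "s \<noteq> 0" by auto
      show "fst (circ_par c r s) = poly [:r^2/2, fst c, 1/2:] s / s^1"
        using s by (simp add: circ_par_def eq_divide_eq)
    qed
    show "\<exists>q N. \<forall>s\<in>-{0}. snd (circ_par c r s) = poly q s / s^N"
    proof (intro exI[of _ "[: -(r^2/(2*\<i>)), snd c, 1/(2*\<i>):]"] exI[of _ 1] ballI)
      fix s :: complex assume "s \<in> -{0}" then have s: "s \<noteq> 0" by auto
      show "snd (circ_par c r s) = poly [: -(r^2/(2*\<i>)), snd c, 1/(2*\<i>):] s / s^1"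
        using s by (simp add: circ_par_def eq_divide_eq;
            simp add: algebra_simps power2_eq_square diff_divide_distrib add_divide_distrib)
    qed
  qed simp
qed

lemma polyfun_circle: "polyfun C2 (\<lambda>z. (fst z - fst c)^2 + (snd z - snd c)^2 - r^2)"
  by (intro pf_diff pf_add pf_pow2 pf_const polyfun_fst polyfun_snd)

lemma circle_closed: "zclosed C2 (circle c r)"
proof -
  have "circle c r = {z. (fst z - fst c)^2 + (snd z - snd c)^2 - r^2 = 0}" by (auto simp: circle_def)
  then show ?thesis using zclosed_zero_set[OF polyfun_circle] by simp
qed

lemma circle_irred: "r \<noteq> 0 \<Longrightarrow> zirred C2 (circle c r)"
  by (intro curve_irred circle_closed circle_infinite circle_curve_prop)

lemma zirred_UNIV: "zirred C2 UNIV"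
  unfolding zirred_def
proof (intro conjI allI impI)
  fix A B assume AB: "zclosed C2 A \<and> zclosed C2 B \<and> (UNIV::(complex\<times>complex) set) \<subseteq> A \<union> B"
  show "UNIV \<subseteq> A \<or> UNIV \<subseteq> B"
  proof (rule ccontr)
    assume "\<not> (UNIV \<subseteq> A \<or> UNIV \<subseteq> B)"
    then obtain a b where ab: "a \<notin> A" "b \<notin> B" by auto
    obtain F where F: "\<forall>f\<in>F. polyfun C2 f" "A = {x. \<forall>f\<in>F. f x = 0}" using AB by (auto simp: zclosed_def)
    obtain G where G: "\<forall>f\<in>G. polyfun C2 f" "B = {x. \<forall>f\<in>G. f x = 0}" using AB by (auto simp: zclosed_def)
    obtain f where f: "f \<in> F" "f a \<noteq> 0" using ab F by auto
    obtain g where g: "g \<in> G" "g b \<noteq> 0" using ab G by auto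
    obtain P Q where PQ: "f = ev P" "g = ev Q" using polyfun_ex F(1) G(1) f g by metis
    have "ev (P * Q) z = 0" for z using AB F G f g PQ by (cases "z \<in> A") auto
    then have "P * Q = 0" by (rule ev_eq_0)
    then show False using f g PQ by auto
  qed
qed (auto simp: zclosed_UNIV)

lemma two_in_chains_UNIV: "2 \<in> chains UNIV"
proof -
  define Z where "Z = (\<lambda>i::nat. if i = 0 then {(0::complex,0::complex)} else if i = 1 then lineset (0,0) (1,0) else UNIV)"
  have l: "zirred C2 (lineset (0,0) (1,0))" by (rule lineset_irred) (simp add: zero_prod_def)
  have "(0,0) \<in> lineset (0::complex,0::complex) (1,0)" unfolding lineset_def by auto
  moreover have "(0,1) \<notin> lineset (0::complex,0::complex) (1,0)" unfolding lineset_def by auto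
  ultimately have s: "{(0,0)} \<subset> lineset (0::complex,0::complex) (1,0)" "lineset (0::complex,0::complex) (1,0) \<subset> UNIV"
    by (auto simp: lineset_def)
  show ?thesis unfolding chains_def
  proof (intro CollectI exI[of _ Z] conjI allI impI)
    fix i :: nat assume "i \<le> 2" then show "zirred C2 (Z i)"
      using l zirred_singleton zirred_UNIV by (auto simp: Z_def)
  next
    fix i :: nat assume "i < 2" then have "i = 0 \<or> i = 1" by auto
    then show "Z i \<subset> Z (Suc i)" using s by (auto simp: Z_def)
  qed (use zcl_sub[of UNIV C2] in \<open>auto simp: Z_def\<close>)
qed

lemma zdim1_not_UNIV: "zdim C2 X = 1 \<Longrightarrow> X \<noteq> UNIV"
  using zdim_eq1 two_in_chains_UNIV by auto

lemma zdim1_sub: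
  assumes "zdim C2 X = 1" "zirred C2 X" "zirred C2 Y" "infinite Y" "Y \<subseteq> X"
  shows "Y = X"
proof (rule ccontr)
  assume ne: "Y \<noteq> X"
  obtain p where p: "p \<in> Y" using assms(4) by (metis finite.emptyI ex_in_conv)
  have "{p} \<noteq> Y" using assms(4) by auto
  define Z where "Z = (\<lambda>i::nat. if i = 0 then {p} else if i = 1 then Y else X)"
  have "2 \<in> chains X" unfolding chains_def
  proof (intro CollectI exI[of _ Z] conjI allI impI)
    fix i :: nat assume "i \<le> 2" then show "zirred C2 (Z i)"
      using assms zirred_singleton by (auto simp: Z_def)
  next
    fix i :: nat assume "i < 2" then have "i = 0 \<or> i = 1" by auto
    then show "Z i \<subset> Z (Suc i)" using p ne assms(5) \<open>{p} \<noteq> Y\<close> by (auto simp: Z_def)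
  next
    show "Z 2 \<subseteq> zcl C2 X" using zcl_sub[of X C2] by (auto simp: Z_def)
  qed
  then show False using zdim_eq1[OF assms(1)] by simp
qed




lemma polyfun_lift1: "polyfun C2 g \<Longrightarrow> polyfun C4 (\<lambda>p. g (fst p))"
proof (induct rule: polyfun.induct)
  case (pf_coord f)
  then have "f = fst \<or> f = snd" by (simp add: C2_def)
  then show ?case by (auto intro!: polyfun.pf_coord simp: C4_def)
qed (auto intro: polyfun.intros)

lemma polyfun_lift2: "polyfun C2 g \<Longrightarrow> polyfun C4 (\<lambda>p. g (snd p))"
proof (induct rule: polyfun.induct)
  case (pf_coord f)
  then have "f = fst \<or> f = snd" by (simp add: C2_def)
  then show ?case by (auto intro!: polyfun.pf_coord simp: C4_def)
qed (auto intro: polyfun.intros)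

lemma zclosed_lift1: assumes "zclosed C2 X" shows "zclosed C4 {p. fst p \<in> X}"
proof -
  obtain F where F: "\<forall>f\<in>F. polyfun C2 f" "X = {x. \<forall>f\<in>F. f x = 0}" using assms by (auto simp: zclosed_def)
  have "{p. fst p \<in> X} = {p. \<forall>h\<in>(\<lambda>f p. f (fst p)) ` F. h p = 0}" using F(2) by auto
  moreover have "\<forall>h\<in>(\<lambda>f p. f (fst p)) ` F. polyfun C4 h" using F(1) polyfun_lift1 by auto
  ultimately show ?thesis unfolding zclosed_def by blast
qed

lemma zclosed_lift2: assumes "zclosed C2 X" shows "zclosed C4 {p. snd p \<in> X}"
proof -
  obtain F where F: "\<forall>f\<in>F. polyfun C2 f" "X = {x. \<forall>f\<in>F. f x = 0}" using assms by (auto simp: zclosed_def)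
  have "{p. snd p \<in> X} = {p. \<forall>h\<in>(\<lambda>f p. f (snd p)) ` F. h p = 0}" using F(2) by auto
  moreover have "\<forall>h\<in>(\<lambda>f p. f (snd p)) ` F. polyfun C4 h" using F(1) polyfun_lift2 by auto
  ultimately show ?thesis unfolding zclosed_def by blast
qed

definition cross :: "complex \<times> complex \<Rightarrow> complex \<times> complex \<Rightarrow> complex" where
  "cross v w = fst v * snd w - snd v * fst w"

lemma normal_mem:
  assumes "g \<in> vanishing C2 X"
  shows "(c * fst (grad g x), c * snd (grad g x)) \<in> normal_space X x"
  unfolding normal_space_def using assms
  by (intro CollectI exI[of _ "[c]"] exI[of _ "[g]"]) auto

lemma normal_lin:
  assumes "\<And>g. g \<in> vanishing C2 X \<Longrightarrow> a * fst (grad g x) + b * snd (grad g x) = 0"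
    and "v \<in> normal_space X x"
  shows "a * fst v + b * snd v = 0"
proof -
  obtain cs fs where v: "length cs = length fs" "set fs \<subseteq> vanishing C2 X"
    "v = ((\<Sum>i<length fs. cs!i * fst (grad (fs!i) x)), (\<Sum>i<length fs. cs!i * snd (grad (fs!i) x)))"
    using assms(2) unfolding normal_space_def by blast
  have "a * fst v + b * snd v = (\<Sum>i<length fs. cs!i * (a * fst (grad (fs!i) x) + b * snd (grad (fs!i) x)))"
    unfolding v(3) by (simp add: sum_distrib_left sum.distrib algebra_simps)
  also have "\<dots> = 0"
    using v(2) assms(1) by (intro sum.neutral) (auto dest: nth_mem)
  finally show ?thesis .
qed

lemma cross_zero_lin:
  assumes "a * fst v + b * snd v = 0" "a * fst w + b * snd w = 0" "(a, b) \<noteq> (0, 0)"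
  shows "cross v w = 0"
proof (cases "a = 0")
  case True
  then have "b \<noteq> 0" using assms(3) by auto
  then have "snd v = 0" "snd w = 0" using assms True by auto
  then show ?thesis by (simp add: cross_def)
next
  case False
  have "a * cross v w = (a * fst v) * snd w - snd v * (a * fst w)" by (simp add: cross_def algebra_simps)
  also have "\<dots> = (- (b * snd v)) * snd w - snd v * (- (b * snd w))"
  proof -
    have h1: "a * fst v = - (b * snd v)" using assms(1) by (simp only: eq_neg_iff_add_eq_0)
    have h2: "a * fst w = - (b * snd w)" using assms(2) by (simp only: eq_neg_iff_add_eq_0)
    show ?thesis by (simp only: h1 h2)
  qed
  also have "\<dots> = 0" by (simp add: algebra_simps)
  finally show ?thesis using False by simp
qed

lemma cdim2_one:
  assumes "\<And>g. g \<in> vanishing C2 X \<Longrightarrow> a * fst (grad g x) + b * snd (grad g x) = 0"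
    and "(a, b) \<noteq> (0, 0)" and "w \<in> normal_space X x" "w \<noteq> (0, 0)"
  shows "cdim2 (normal_space X x) = 1"
proof -
  have "\<not> normal_space X x \<subseteq> {(0, 0)}" using assms(3,4) by auto
  moreover have "\<not> (\<exists>v\<in>normal_space X x. \<exists>w\<in>normal_space X x. fst v * snd w - snd v * fst w \<noteq> 0)"
    using cross_zero_lin[OF normal_lin[OF assms(1)] normal_lin[OF assms(1)] assms(2)]
    by (auto simp: cross_def)
  ultimately show ?thesis unfolding cdim2_def by auto
qed

lemma cdim2_one_cross:
  assumes "cdim2 N = 1" "v \<in> N" "w \<in> N"
  shows "cross v w = 0"
  using assms unfolding cdim2_def cross_def by (auto split: if_splits)

lemma reg_cross:
  assumes "zdim C2 X = 1" "x \<in> reg X" "v \<in> normal_space X x" "w \<in> normal_space X x"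
  shows "cross v w = 0"
  using assms unfolding reg_def by (auto intro: cdim2_one_cross)

subsection \<open>ED correspondence is contained in an explicit closed set\<close>

lemma ED_sub:
  assumes dim: "zdim C2 X = 1" and cl: "zclosed C2 X"
    and pg: "polyfun C2 g" "polyfun C2 gx" "polyfun C2 gy" and van: "\<And>x. x \<in> X \<Longrightarrow> g x = 0"
    and gr: "\<And>x. grad g x = (gx x, gy x)"
  shows "ED_corr X \<subseteq> {p. fst p \<in> X \<and>
     (fst (snd p) - fst (fst p)) * gy (fst p) - (snd (snd p) - snd (fst p)) * gx (fst p) = 0}"
proof -
  let ?E = "{p. fst p \<in> X \<and>
     (fst (snd p) - fst (fst p)) * gy (fst p) - (snd (snd p) - snd (fst p)) * gx (fst p) = 0}"
  have Eeq: "?E = {p. fst p \<in> X} \<inter> {p. (fst (snd p) - fst (fst p)) * gy (fst p) - (snd (snd p) - snd (fst p)) * gx (fst p) = 0}"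
    by auto
  have Ez: "zclosed C4 {p. (fst (snd p) - fst (fst p)) * gy (fst p) - (snd (snd p) - snd (fst p)) * gx (fst p) = 0}"
  proof (rule zclosed_zero_set)
    have a: "polyfun C4 (\<lambda>p. fst (snd p))" "polyfun C4 (\<lambda>p. snd (snd p))"
      using polyfun_lift2[OF polyfun_fst] polyfun_lift2[OF polyfun_snd] by auto
    have b: "polyfun C4 (\<lambda>p. fst (fst p))" "polyfun C4 (\<lambda>p. snd (fst p))"
      using polyfun_lift1[OF polyfun_fst] polyfun_lift1[OF polyfun_snd] by auto
    show "polyfun C4 (\<lambda>p. (fst (snd p) - fst (fst p)) * gy (fst p) - (snd (snd p) - snd (fst p)) * gx (fst p))"
      by (intro pf_diff pf_mult a b polyfun_lift1 pg)
  qed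
  have Ecl: "zclosed C4 ?E" unfolding Eeq by (rule zclosed_Int[OF zclosed_lift1[OF cl] Ez])
  have "{(x, u). x \<in> reg X \<and> (fst u - fst x, snd u - snd x) \<in> normal_space X x} \<subseteq> ?E"
  proof safe
    fix x u assume x: "x \<in> reg X" and u: "(fst u - fst x, snd u - snd x) \<in> normal_space X x"
    have xX: "x \<in> X" using x by (simp add: reg_def)
    have "g \<in> vanishing C2 X" using pg van by (simp add: vanishing_def)
    from normal_mem[OF this, of 1 x] have "(gx x, gy x) \<in> normal_space X x" using gr by simp
    from reg_cross[OF dim x u this] xX
    show "fst (x, u) \<in> X" "(fst (snd (x, u)) - fst (fst (x, u))) * gy (fst (x, u)) - (snd (snd (x, u)) - snd (fst (x, u))) * gx (fst (x, u)) = 0"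
      by (auto simp: cross_def)
  qed
  then show ?thesis unfolding ED_corr_def by (rule zcl_least[OF Ecl])
qed

lemma fiber_sub:
  assumes "ED_corr X \<subseteq> {p. fst p \<in> X \<and> R (fst p) (snd p)}"
  shows "ED_fiber X u \<subseteq> {x. x \<in> X \<and> R x u}"
  using assms unfolding ED_fiber_def by auto

subsection \<open>Rotations\<close>

definition rot :: "complex \<times> complex \<Rightarrow> complex \<times> complex \<Rightarrow> complex \<Rightarrow> complex \<times> complex" where
  "rot c v t = (fst c + cos t * fst v - sin t * snd v, snd c + sin t * fst v + cos t * snd v)"

lemma rot_0: "rot c v 0 = (fst c + fst v, snd c + snd v)" by (simp add: rot_def)

lemma rot_deriv1: "((\<lambda>t. fst (rot c v t)) has_field_derivative -(snd (rot c v t) - snd c)) (at t)"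
  unfolding rot_def by (auto intro!: derivative_eq_intros simp: algebra_simps)

lemma rot_deriv2: "((\<lambda>t. snd (rot c v t)) has_field_derivative (fst (rot c v t) - fst c)) (at t)"
  unfolding rot_def by (auto intro!: derivative_eq_intros simp: algebra_simps)

lemma rot_norm_aux: "(p + b * x - a * y - p)^2 + (q + a * x + b * y - q)^2 = (a^2 + b^2) * (x^2 + (y::complex)^2)"
  by (simp add: power2_eq_square algebra_simps)

lemma rot_norm: "(fst (rot c v t) - fst c)^2 + (snd (rot c v t) - snd c)^2 = (fst v)^2 + (snd v)^2"
proof -
  have "(fst (rot c v t) - fst c)^2 + (snd (rot c v t) - snd c)^2 =
        ((sin t)^2 + (cos t)^2) * ((fst v)^2 + (snd v)^2)"
    unfolding rot_def fst_conv snd_conv by (rule rot_norm_aux)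
  then show ?thesis by simp
qed

lemma ev_rot_deriv:
  "((\<lambda>t. ev P (rot c v t)) has_field_derivative
     (ev (Dx P) (rot c v t) * (-(snd (rot c v t) - snd c)) + ev (Dy P) (rot c v t) * (fst (rot c v t) - fst c))) (at t)"
  using ev_chain[OF rot_deriv1[of c v] rot_deriv2[of c v], of P] by simp

lemma rot_transitive:
  assumes k: "(fst v)^2 + (snd v)^2 = k" "(fst w)^2 + (snd w)^2 = k" "k \<noteq> 0"
  shows "\<exists>t. rot c v t = (fst c + fst w, snd c + snd w)"
proof -
  define A where "A = fst v * fst w + snd v * snd w"
  define B where "B = fst v * snd w - snd v * fst w"
  define \<alpha> where "\<alpha> = A / k"
  define \<beta> where "\<beta> = B / k"
  have lag: "(fst v * fst w + snd v * snd w)^2 + (fst v * snd w - snd v * fst w)^2 =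
             ((fst v)^2 + (snd v)^2) * ((fst w)^2 + (snd w)^2)"
    by (simp add: power2_eq_square algebra_simps)
  have ab1: "\<alpha>^2 + \<beta>^2 = 1" using lag k
    by (simp add: \<alpha>_def \<beta>_def A_def B_def power_divide add_divide_distrib[symmetric] power2_eq_square)
  define s where "s = \<alpha> + \<i> * \<beta>"
  have ss: "s * (\<alpha> - \<i> * \<beta>) = 1" using ab1 by (simp add: s_def algebra_simps power2_eq_square)
  then have s0: "s \<noteq> 0" by auto
  have inv: "inverse s = \<alpha> - \<i> * \<beta>" using ss s0 by (simp add: field_simps)
  define t where "t = - \<i> * Ln s"
  have e1: "exp (\<i> * t) = s" using s0 by (simp add: t_def)
  have e2: "exp (- (\<i> * t)) = \<alpha> - \<i> * \<beta>" using e1 inv by (simp add: exp_minus)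
  have ct: "cos t = \<alpha>" unfolding cos_exp_eq e1 e2 by (simp add: s_def)
  have st: "sin t = \<beta>" unfolding sin_exp_eq e1 e2 by (simp add: s_def field_simps)
  have r1: "\<alpha> * fst v - \<beta> * snd v = fst w"
  proof -
    have "\<alpha> * fst v - \<beta> * snd v = (A * fst v - B * snd v) / k"
      by (simp add: \<alpha>_def \<beta>_def diff_divide_distrib)
    also have "\<dots> = fst w * ((fst v)^2 + (snd v)^2) / k"
      by (simp add: A_def B_def algebra_simps power2_eq_square)
    finally have "\<alpha> * fst v - \<beta> * snd v = fst w * ((fst v)^2 + (snd v)^2) / k" .
    then show ?thesis using k by simp
  qed
  have r2: "\<beta> * fst v + \<alpha> * snd v = snd w"
  proof -
    have "\<beta> * fst v + \<alpha> * snd v = (B * fst v + A * snd v) / k"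
      by (simp add: \<alpha>_def \<beta>_def add_divide_distrib)
    also have "\<dots> = snd w * ((fst v)^2 + (snd v)^2) / k"
      by (simp add: A_def B_def algebra_simps power2_eq_square)
    finally have "\<beta> * fst v + \<alpha> * snd v = snd w * ((fst v)^2 + (snd v)^2) / k" .
    then show ?thesis using k by simp
  qed
  show ?thesis using r1 r2 ct st by (intro exI[of _ t]) (simp add: rot_def algebra_simps)
qed

subsection \<open>The ODE argument\<close>

lemma ode_invariant:
  assumes G: "(cst (fst u) - X1) * Dy f - (cst (snd u) - X2) * Dx f = f * q"
    and x0: "ev f x0 = 0"
  shows "ev f (rot u (fst x0 - fst u, snd x0 - snd u) t) = 0"
proof -
  define v where "v = (fst x0 - fst u, snd x0 - snd u)"
  define \<phi> where "\<phi> = (\<lambda>t. ev f (rot u v t))"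
  define a where "a = (\<lambda>t. - ev q (rot u v t))"
  have Gev: "(fst u - fst y) * ev (Dy f) y - (snd u - snd y) * ev (Dx f) y = ev f y * ev q y" for y
    using arg_cong[OF G, of "\<lambda>P. ev P y"] by simp
  have dphi: "(\<phi> has_field_derivative a t * \<phi> t) (at t)" for t
  proof -
    have "(\<phi> has_field_derivative
       (ev (Dx f) (rot u v t) * (-(snd (rot u v t) - snd u)) + ev (Dy f) (rot u v t) * (fst (rot u v t) - fst u))) (at t)"
      unfolding \<phi>_def by (rule ev_rot_deriv)
    moreover have "ev (Dx f) (rot u v t) * (-(snd (rot u v t) - snd u)) + ev (Dy f) (rot u v t) * (fst (rot u v t) - fst u)
        = a t * \<phi> t"
      using Gev[of "rot u v t"] unfolding a_def \<phi>_def by (simp add: algebra_simps)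
    ultimately show ?thesis by simp
  qed
  have da: "(a has_field_derivative
      - (ev (Dx q) (rot u v t) * (-(snd (rot u v t) - snd u)) + ev (Dy q) (rot u v t) * (fst (rot u v t) - fst u))) (at t)" for t
    unfolding a_def by (intro derivative_intros ev_rot_deriv)
  have conta: "continuous_on UNIV a"
    by (rule continuous_at_imp_continuous_on) (use da DERIV_continuous in blast)
  obtain A where A: "\<And>x. x \<in> UNIV \<Longrightarrow> (A has_field_derivative a x) (at x within UNIV)"
  proof (rule holomorphic_convex_primitive[of UNIV "{}" a])
    show "\<And>x. x \<in> interior UNIV - {} \<Longrightarrow> a field_differentiable at x"
      using da unfolding field_differentiable_def by blast
  qed (use conta in auto)
  define \<psi> where "\<psi> = (\<lambda>t. \<phi> t * exp (- A t))"
  have "(\<psi> has_field_derivative 0) (at t within UNIV)" for t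
  proof -
    have "(\<psi> has_field_derivative (a t * \<phi> t) * exp (- A t) + \<phi> t * (exp (- A t) * (- a t))) (at t)"
      unfolding \<psi>_def using A[of t] dphi[of t] by (auto intro!: derivative_eq_intros)
    then show ?thesis by (simp add: algebra_simps)
  qed
  then obtain k where "\<forall>t\<in>UNIV. \<psi> t = k" using has_field_derivative_zero_constant[of UNIV \<psi>] by auto
  then have "\<psi> t = \<psi> 0" by simp
  moreover have "\<phi> 0 = 0" unfolding \<phi>_def v_def using x0 by (simp add: rot_0)
  ultimately have "\<phi> t * exp (- A t) = 0" by (simp add: \<psi>_def)
  then show ?thesis by (simp add: \<phi>_def v_def)
qed




lemma tangent_line:
  assumes x: "x \<in> lineset p d" and g: "g \<in> vanishing C2 (lineset p d)"
  shows "fst d * fst (grad g x) + snd d * snd (grad g x) = 0"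
proof -
  obtain P where P: "g = ev P" using g polyfun_ex by (auto simp: vanishing_def)
  obtain s where s: "x = (fst p + s * fst d, snd p + s * snd d)" using x by (auto simp: lineset_def)
  have on: "(fst x + t * fst d, snd x + t * snd d) \<in> lineset p d" for t
    unfolding lineset_def s by (intro CollectI exI[of _ "s + t"]) (simp add: algebra_simps)
  have z: "ev P (fst x + t * fst d, snd x + t * snd d) = 0" for t
    using g on[of t] P by (auto simp: vanishing_def)
  have d1: "((\<lambda>t. fst x + t * fst d) has_field_derivative fst d) (at 0)"
    by (auto intro!: derivative_eq_intros)
  have d2: "((\<lambda>t. snd x + t * snd d) has_field_derivative snd d) (at 0)"
    by (auto intro!: derivative_eq_intros)
  from ev_chain[OF d1 d2, of P]
  have "((\<lambda>t. 0) has_field_derivative ev (Dx P) x * fst d + ev (Dy P) x * snd d) (at 0)"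
    using z by simp
  moreover have "((\<lambda>t::complex. 0::complex) has_field_derivative 0) (at 0)" by simp
  ultimately have "ev (Dx P) x * fst d + ev (Dy P) x * snd d = 0" using DERIV_unique by blast
  then show ?thesis by (simp add: P grad_ev algebra_simps)
qed

lemma tangent_circle:
  assumes x: "x \<in> circle c r" and g: "g \<in> vanishing C2 (circle c r)"
  shows "(-(snd x - snd c)) * fst (grad g x) + (fst x - fst c) * snd (grad g x) = 0"
proof -
  obtain P where P: "g = ev P" using g polyfun_ex by (auto simp: vanishing_def)
  define v where "v = (fst x - fst c, snd x - snd c)"
  have on: "rot c v t \<in> circle c r" for t
    using rot_norm[of c v t] x by (simp add: circle_def v_def)
  have z: "ev P (rot c v t) = 0" for t using g on[of t] P by (auto simp: vanishing_def)
  have r0: "rot c v 0 = x" by (simp add: rot_0 v_def)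
  from ev_rot_deriv[of P c v 0]
  have "((\<lambda>t. 0) has_field_derivative ev (Dx P) x * (-(snd x - snd c)) + ev (Dy P) x * (fst x - fst c)) (at 0)"
    using z r0 by simp
  moreover have "((\<lambda>t::complex. 0::complex) has_field_derivative 0) (at 0)" by simp
  ultimately have "ev (Dx P) x * (-(snd x - snd c)) + ev (Dy P) x * (fst x - fst c) = 0" using DERIV_unique by blast
  then show ?thesis by (simp add: P grad_ev algebra_simps)
qed

lemma grad_circ: "grad (\<lambda>z. (fst z - fst c)^2 + (snd z - snd c)^2 - r^2) x =
    (2 * (fst x - fst c), 2 * (snd x - snd c))"
proof -
  have 1: "((\<lambda>t. (t - fst c)^2 + (snd x - snd c)^2 - r^2) has_field_derivative 2 * (fst x - fst c)) (at (fst x))"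
    by (auto intro!: derivative_eq_intros)
  have 2: "((\<lambda>t. (fst x - fst c)^2 + (t - snd c)^2 - r^2) has_field_derivative 2 * (snd x - snd c)) (at (snd x))"
    by (auto intro!: derivative_eq_intros)
  show ?thesis unfolding grad_def using DERIV_imp_deriv[OF 1] DERIV_imp_deriv[OF 2] by simp
qed

lemma grad_lin: "grad (\<lambda>z. fst d * (fst z - fst p) + snd d * (snd z - snd p)) x = (fst d, snd d)"
proof -
  have 1: "((\<lambda>t. fst d * (t - fst p) + snd d * (snd x - snd p)) has_field_derivative fst d) (at (fst x))"
    by (auto intro!: derivative_eq_intros)
  have 2: "((\<lambda>t. fst d * (fst x - fst p) + snd d * (t - snd p)) has_field_derivative snd d) (at (snd x))"
    by (auto intro!: derivative_eq_intros)
  show ?thesis unfolding grad_def using DERIV_imp_deriv[OF 1] DERIV_imp_deriv[OF 2] by simp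
qed

lemma polyfun_lin: "polyfun C2 (\<lambda>z. fst d * (fst z - fst p) + snd d * (snd z - snd p))"
  by (intro pf_add pf_mult pf_diff pf_const polyfun_fst polyfun_snd)

subsection \<open>Isotropic lines\<close>

definition iso :: "complex \<times> complex \<Rightarrow> bool" where "iso d \<longleftrightarrow> d = (\<i>, -1) \<or> d = (\<i>, 1)"

lemma iso_param:
  assumes "iso d" "fst d * a + snd d * b = 0"
  shows "a = (- \<i> * a) * fst d" "b = (- \<i> * a) * snd d"
proof -
  from assms(1) consider "d = (\<i>, -1)" | "d = (\<i>, 1)" unfolding iso_def by blast
  then have "a = (- \<i> * a) * fst d \<and> b = (- \<i> * a) * snd d"
  proof cases
    case 1
    then have "\<i> * a - b = 0" using assms(2) by simp
    then have "b = \<i> * a" by simp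
    then show ?thesis using 1 by (simp add: algebra_simps)
  next
    case 2
    then have "\<i> * a + b = 0" using assms(2) by simp
    then have "b = - (\<i> * a)" by (simp add: eq_neg_iff_add_eq_0 add.commute)
    then show ?thesis using 2 by (simp add: algebra_simps)
  qed
  then show "a = (- \<i> * a) * fst d" "b = (- \<i> * a) * snd d" by auto
qed

lemma iso_dot: "iso d \<Longrightarrow> (fst d)^2 + (snd d)^2 = 0"
  unfolding iso_def by (auto simp: power2_eq_square)

lemma iso_nz: "iso d \<Longrightarrow> d \<noteq> 0"
  unfolding iso_def by (auto simp: zero_prod_def)

lemma iso_line_eq:
  assumes "iso d"
  shows "lineset p d = {z. fst d * (fst z - fst p) + snd d * (snd z - snd p) = 0}"
proof safe
  fix a b assume h: "fst d * (fst (a, b) - fst p) + snd d * (snd (a, b) - snd p) = 0"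
  have "a - fst p = (- \<i> * (a - fst p)) * fst d" "b - snd p = (- \<i> * (a - fst p)) * snd d"
    using iso_param[OF assms, of "a - fst p" "b - snd p"] h by auto
  then show "(a, b) \<in> lineset p d" unfolding lineset_def
    by (intro CollectI exI[of _ "- \<i> * (a - fst p)"]) (auto simp: algebra_simps)
next
  fix x assume "x \<in> lineset p d"
  then obtain t where t: "x = (fst p + t * fst d, snd p + t * snd d)" by (auto simp: lineset_def)
  have "fst d * (t * fst d) + snd d * (t * snd d) = t * ((fst d)^2 + (snd d)^2)"
    by (simp add: power2_eq_square algebra_simps)
  then show "fst d * (fst x - fst p) + snd d * (snd x - snd p) = 0" using t iso_dot[OF assms] by simp
qed




lemma irred_curve_dim: "irred_curve X \<Longrightarrow> zdim C2 X = 1"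
  by (simp add: irred_curve_def)

lemma line_case:
  assumes d: "iso d" and ic: "irred_curve (lineset p d)"
  shows "Sigma_inf (lineset p d) = lineset p d"
proof -
  let ?X = "lineset p d"
  let ?l = "\<lambda>z. fst d * (fst z - fst p) + snd d * (snd z - snd p)"
  have dim: "zdim C2 ?X = 1" using ic by (simp add: irred_curve_def)
  have d0: "d \<noteq> 0" using iso_nz[OF d] .
  have d00: "(fst d, snd d) \<noteq> (0, 0)" using d0 by (auto simp: zero_prod_def prod_eq_iff)
  have Xeq: "?X = {z. ?l z = 0}" by (rule iso_line_eq[OF d])
  have lvan: "?l \<in> vanishing C2 ?X" using Xeq polyfun_lin by (auto simp: vanishing_def)
  have dN: "(s * fst d, s * snd d) \<in> normal_space ?X x" for s x
    using normal_mem[OF lvan, of s x] by (simp add: grad_lin)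
  have lin: "fst d * fst v + snd d * snd v = 0" if "x \<in> ?X" "v \<in> normal_space ?X x" for x v
    using normal_lin[OF tangent_line[OF that(1)] that(2)] .
  have regX: "reg ?X = ?X"
  proof safe
    fix x assume x: "x \<in> ?X"
    have "cdim2 (normal_space ?X x) = 1"
      by (rule cdim2_one[OF tangent_line[OF x] d00 dN[of 1 x]]) (use d0 in \<open>auto simp: zero_prod_def prod_eq_iff\<close>)
    then show "x \<in> reg ?X" using x dim by (simp add: reg_def)
  qed (simp add: reg_def)
  have S: "{(x, u). x \<in> reg ?X \<and> (fst u - fst x, snd u - snd x) \<in> normal_space ?X x} = {q. fst q \<in> ?X} \<inter> {q. snd q \<in> ?X}"
  proof safe
    fix x u assume x: "x \<in> reg ?X" and u: "(fst u - fst x, snd u - snd x) \<in> normal_space ?X x"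
    have xX: "x \<in> ?X" using x regX by simp
    show "fst (x, u) \<in> ?X" using xX by simp
    have "fst d * (fst u - fst x) + snd d * (snd u - snd x) = 0" using lin[OF xX u] by simp
    moreover have "?l x = 0" using xX Xeq by auto
    ultimately have "?l u = 0" by (simp add: algebra_simps)
    then show "snd (x, u) \<in> ?X" using Xeq by auto
  next
    fix x u assume x: "fst (x, u) \<in> ?X" and u: "snd (x, u) \<in> ?X"
    then have "?l x = 0" "?l u = 0" using Xeq by auto
    then have h: "fst d * (fst u - fst x) + snd d * (snd u - snd x) = 0" by (simp add: algebra_simps)
    define s where "s = - \<i> * (fst u - fst x)"
    have "fst u - fst x = s * fst d" "snd u - snd x = s * snd d"
      using iso_param[OF d h] by (simp_all add: s_def)
    then have "(fst u - fst x, snd u - snd x) \<in> normal_space ?X x" using dN[of s x] by simp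
    then show "x \<in> reg ?X" "(fst u - fst x, snd u - snd x) \<in> normal_space ?X x" using x regX by auto
  qed
  have Xcl: "zclosed C2 ?X" using lineset_closed[OF d0] .
  have "ED_corr ?X = {q. fst q \<in> ?X} \<inter> {q. snd q \<in> ?X}"
    unfolding ED_corr_def S by (rule zcl_closed[OF zclosed_Int[OF zclosed_lift1[OF Xcl] zclosed_lift2[OF Xcl]]])
  then have fib: "ED_fiber ?X u = (if u \<in> ?X then ?X else {})" for u
    unfolding ED_fiber_def by auto
  show ?thesis unfolding Sigma_inf_def fib using dim by (auto simp: zdim_empty)
qed

lemma circ_fin:
  assumes u: "u \<noteq> c" and r: "r \<noteq> 0"
  shows "finite {x. x \<in> circle c r \<and>
     (fst u - fst x) * (2 * (snd x - snd c)) - (snd u - snd x) * (2 * (fst x - fst c)) = 0}"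
proof -
  define w1 where "w1 = fst u - fst c"
  define w2 where "w2 = snd u - snd c"
  have w: "(w1, w2) \<noteq> (0, 0)" using u by (auto simp: w1_def w2_def prod_eq_iff)
  define Q where "Q = [: -(r^2), 0, w1^2 + w2^2 :]"
  have Q0: "Q \<noteq> 0" using r by (simp add: Q_def)
  have "{x. x \<in> circle c r \<and>
     (fst u - fst x) * (2 * (snd x - snd c)) - (snd u - snd x) * (2 * (fst x - fst c)) = 0}
     \<subseteq> (\<lambda>t. (fst c + t * w1, snd c + t * w2)) ` {t. poly Q t = 0}"
  proof safe
    fix a b assume circ: "(a, b) \<in> circle c r" and
      h: "(fst u - fst (a, b)) * (2 * (snd (a, b) - snd c)) - (snd u - snd (a, b)) * (2 * (fst (a, b) - fst c)) = 0"
    define y1 where "y1 = a - fst c"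
    define y2 where "y2 = b - snd c"
    have hy: "w1 * y2 - w2 * y1 = 0"
    proof -
      have "2 * (w1 * y2 - w2 * y1) = (fst u - a) * (2 * (b - snd c)) - (snd u - b) * (2 * (a - fst c))"
        by (simp add: w1_def w2_def y1_def y2_def algebra_simps)
      then show ?thesis using h by simp
    qed
    define t where "t = (if w1 \<noteq> 0 then y1 / w1 else y2 / w2)"
    have yt: "y1 = t * w1 \<and> y2 = t * w2"
    proof (cases "w1 = 0")
      case False
      have "y2 = y1 * w2 / w1" using hy False by (simp add: field_simps)
      then show ?thesis using False by (simp add: t_def)
    next
      case True
      then have "w2 \<noteq> 0" using w by auto
      then have "y1 = 0" using hy True by simp
      then show ?thesis using True \<open>w2 \<noteq> 0\<close> by (simp add: t_def)
    qed
    have "y1^2 + y2^2 = r^2" using circ by (simp add: circle_def y1_def y2_def)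
    then have "t^2 * (w1^2 + w2^2) = r^2" using yt by (simp add: power_mult_distrib algebra_simps)
    then have "poly Q t = 0" by (simp add: Q_def algebra_simps power2_eq_square)
    moreover have "(a, b) = (fst c + t * w1, snd c + t * w2)" using yt by (simp add: y1_def y2_def algebra_simps)
    ultimately show "(a, b) \<in> (\<lambda>t. (fst c + t * w1, snd c + t * w2)) ` {t. poly Q t = 0}" by blast
  qed
  moreover have "finite ((\<lambda>t. (fst c + t * w1, snd c + t * w2)) ` {t. poly Q t = 0})"
    using Q0 poly_roots_finite by blast
  ultimately show ?thesis using finite_subset by blast
qed

lemma circle_case:
  assumes r: "r \<noteq> 0" and ic: "irred_curve (circle c r)"
  shows "Sigma_inf (circle c r) = {c}"
proof -
  let ?X = "circle c r"
  let ?g = "\<lambda>z. (fst z - fst c)^2 + (snd z - snd c)^2 - r^2"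
  have dim: "zdim C2 ?X = 1" using ic by (simp add: irred_curve_def)
  have gvan: "?g \<in> vanishing C2 ?X" using polyfun_circle by (auto simp: vanishing_def circle_def)
  have regX: "x \<in> reg ?X" if x: "x \<in> ?X" for x
  proof -
    have nz: "(-(snd x - snd c), fst x - fst c) \<noteq> (0, 0)"
      using x r by (auto simp: circle_def)
    have "(1 * fst (grad ?g x), 1 * snd (grad ?g x)) \<in> normal_space ?X x" by (rule normal_mem[OF gvan])
    then have gN: "(2 * (fst x - fst c), 2 * (snd x - snd c)) \<in> normal_space ?X x" by (simp add: grad_circ)
    have "cdim2 (normal_space ?X x) = 1"
      by (rule cdim2_one[OF tangent_circle[OF x] nz gN]) (use nz in auto)
    then show ?thesis using x dim by (simp add: reg_def)
  qed
  have sub: "ED_corr ?X \<subseteq> {p. fst p \<in> ?X \<and>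
     (fst (snd p) - fst (fst p)) * (2 * (snd (fst p) - snd c)) - (snd (snd p) - snd (fst p)) * (2 * (fst (fst p) - fst c)) = 0}"
    by (rule ED_sub[OF dim circle_closed polyfun_circle])
       (auto intro!: pf_mult pf_diff pf_const polyfun_fst polyfun_snd simp: circle_def grad_circ)
  have "c \<in> Sigma_inf ?X"
  proof -
    have "ED_fiber ?X c = ?X"
    proof
      show "ED_fiber ?X c \<subseteq> ?X" using fiber_sub[OF sub] by blast
    next
      show "?X \<subseteq> ED_fiber ?X c"
      proof
        fix x assume x: "x \<in> ?X"
        have "((-1/2) * fst (grad ?g x), (-1/2) * snd (grad ?g x)) \<in> normal_space ?X x" by (rule normal_mem[OF gvan])
        then have "(fst c - fst x, snd c - snd x) \<in> normal_space ?X x" by (simp add: grad_circ algebra_simps)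
        then have "(x, c) \<in> {(x, u). x \<in> reg ?X \<and> (fst u - fst x, snd u - snd x) \<in> normal_space ?X x}"
          using regX[OF x] by simp
        then have "(x, c) \<in> ED_corr ?X" unfolding ED_corr_def by (rule subsetD[OF zcl_sub])
        then show "x \<in> ED_fiber ?X c" by (simp add: ED_fiber_def)
      qed
    qed
    then show ?thesis using dim by (simp add: Sigma_inf_def)
  qed
  moreover have "u \<notin> Sigma_inf ?X" if u: "u \<noteq> c" for u
  proof -
    have "ED_fiber ?X u \<subseteq> {x. x \<in> ?X \<and>
       (fst u - fst x) * (2 * (snd x - snd c)) - (snd u - snd x) * (2 * (fst x - fst c)) = 0}"
      using fiber_sub[OF sub] by blast
    then have "finite (ED_fiber ?X u)" using circ_fin[OF u r] finite_subset by blast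
    then show ?thesis using zdim_lt1_finite by (simp add: Sigma_inf_def not_le)
  qed
  ultimately show ?thesis by blast
qed




lemma general_case:
  assumes ic: "irred_curve X" and fz: "zdim C2 (ED_fiber X u) \<ge> 1"
  shows "(\<exists>r. r \<noteq> 0 \<and> X = circle u r) \<or> line_dir (\<i>, -1) X \<or> line_dir (\<i>, 1) X"
proof -
  have irr: "zirred C2 X" and dim: "zdim C2 X = 1" using ic by (auto simp: irred_curve_def)
  have cl: "zclosed C2 X" using irr by (simp add: zirred_def)
  have nU: "X \<noteq> UNIV" using zdim1_not_UNIV[OF dim] .
  have inf: "infinite X" using zdim_ge1_infinite[of X] dim zcl_closed[OF cl] by simp
  obtain f where f: "irreducible f" "X = V f" using K2[OF irr nU inf] by blast
  define Gp where "Gp = (cst (fst u) - X1) * Dy f - (cst (snd u) - X2) * Dx f"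
  have evG: "ev Gp x = (fst u - fst x) * ev (Dy f) x - (snd u - snd x) * ev (Dx f) x" for x
    by (simp add: Gp_def)
  have sub: "ED_corr X \<subseteq> {p. fst p \<in> X \<and>
     (fst (snd p) - fst (fst p)) * ev (Dy f) (fst p) - (snd (snd p) - snd (fst p)) * ev (Dx f) (fst p) = 0}"
    by (rule ED_sub[OF dim cl polyfun_ev polyfun_ev polyfun_ev]) (auto simp: f V_def grad_ev)
  let ?T = "{z. ev f z = 0 \<and> ev Gp z = 0}"
  have fibsub: "ED_fiber X u \<subseteq> ?T" using fiber_sub[OF sub, of u] f(2) evG by (auto simp: V_def)
  have "?T = V f \<inter> V Gp" by (auto simp: V_def)
  then have Tcl: "zclosed C2 ?T" using zclosed_Int[OF zclosed_V zclosed_V] by simp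
  have "zcl C2 (ED_fiber X u) \<subseteq> ?T" by (rule zcl_least[OF Tcl fibsub])
  then have infT: "infinite ?T" using zdim_ge1_infinite[OF fz] finite_subset by blast
  have "f dvd Gp" using K1[OF f(1)] infT by blast
  then obtain q where "Gp = f * q" by blast
  then have G: "(cst (fst u) - X1) * Dy f - (cst (snd u) - X2) * Dx f = f * q" by (simp add: Gp_def)
  have inv: "rot u (fst x0 - fst u, snd x0 - snd u) t \<in> X" if "x0 \<in> X" for x0 t
    using ode_invariant[OF G, of x0 t] that f(2) by (simp add: V_def)
  show ?thesis
  proof (cases "\<exists>x0\<in>X. (fst x0 - fst u)^2 + (snd x0 - snd u)^2 \<noteq> 0")
    case True
    then obtain x0 where x0: "x0 \<in> X" and k: "(fst x0 - fst u)^2 + (snd x0 - snd u)^2 \<noteq> 0" by blast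
    define k where "k = (fst x0 - fst u)^2 + (snd x0 - snd u)^2"
    define r where "r = csqrt k"
    have rk: "r^2 = k" by (simp add: r_def)
    have r0: "r \<noteq> 0" using k rk by (auto simp: k_def)
    have "circle u r \<subseteq> X"
    proof
      fix w assume "w \<in> circle u r"
      then have w: "(fst w - fst u)^2 + (snd w - snd u)^2 = k" using rk by (simp add: circle_def)
      obtain t where t: "rot u (fst x0 - fst u, snd x0 - snd u) t = (fst u + (fst w - fst u), snd u + (snd w - snd u))"
        using rot_transitive[of "(fst x0 - fst u, snd x0 - snd u)" k "(fst w - fst u, snd w - snd u)" u] w k
        by (auto simp: k_def)
      have "rot u (fst x0 - fst u, snd x0 - snd u) t = w" using t by (simp add: prod_eq_iff)
      then show "w \<in> X" using inv[OF x0, of t] by simp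
    qed
    then have "circle u r = X" using zdim1_sub[OF dim irr circle_irred[OF r0] circle_infinite[OF r0]] by simp
    then show ?thesis using r0 by blast
  next
    case False
    let ?L1 = "lineset u (\<i>, -1)" and ?L2 = "lineset u (\<i>, 1)"
    have iso1: "iso (\<i>, -1)" and iso2: "iso (\<i>, 1)" by (simp_all add: iso_def)
    have "X \<subseteq> ?L1 \<union> ?L2"
    proof
      fix x assume x: "x \<in> X"
      define a where "a = fst x - fst u"
      define b where "b = snd x - snd u"
      have "a^2 + b^2 = 0" using False x by (auto simp: a_def b_def)
      then have "(a + \<i> * b) * (a - \<i> * b) = 0" by (simp add: algebra_simps power2_eq_square)
      then have "a + \<i> * b = 0 \<or> a - \<i> * b = 0" by simp
      then show "x \<in> ?L1 \<union> ?L2"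
      proof
        assume h: "a + \<i> * b = 0"
        have "\<i> * a - b = \<i> * (a + \<i> * b)" by (simp add: algebra_simps)
        then have "\<i> * a - b = 0" using h by simp
        then have "x \<in> ?L1" unfolding iso_line_eq[OF iso1] by (simp add: a_def b_def)
        then show ?thesis by simp
      next
        assume h: "a - \<i> * b = 0"
        have "\<i> * a + b = \<i> * (a - \<i> * b)" by (simp add: algebra_simps)
        then have "\<i> * a + b = 0" using h by simp
        then have "x \<in> ?L2" unfolding iso_line_eq[OF iso2] by (simp add: a_def b_def)
        then show ?thesis by simp
      qed
    qed
    moreover have "zclosed C2 ?L1" "zclosed C2 ?L2"
      by (simp_all add: lineset_closed zero_prod_def)
    ultimately have "X \<subseteq> ?L1 \<or> X \<subseteq> ?L2" using irr unfolding zirred_def by blast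
    then have "X = ?L1 \<or> X = ?L2"
      using curve_eq[OF cl inf _ lineset_curve_prop] by blast
    then show ?thesis unfolding line_dir_iff by blast
  qed
qed

lemma circle_not_line:
  assumes d: "iso d" and r: "r \<noteq> 0"
  shows "circle c r \<noteq> lineset p d"
proof
  assume eq: "circle c r = lineset p d"
  have "p \<in> lineset p d" unfolding lineset_def by (intro CollectI exI[of _ 0]) simp
  then have "p \<in> circle c r" using eq by simp
  then have h0: "(fst p - fst c)^2 + (snd p - snd c)^2 = r^2" by (simp add: circle_def)
  have "(fst p + fst d, snd p + snd d) \<in> lineset p d" unfolding lineset_def by (intro CollectI exI[of _ 1]) simp
  then have "(fst p + fst d, snd p + snd d) \<in> circle c r" using eq by simp
  then have h1: "(fst p + fst d - fst c)^2 + (snd p + snd d - snd c)^2 = r^2" by (simp add: circle_def)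
  define a where "a = fst p - fst c"
  define b where "b = snd p - snd c"
  have "(fst p + fst d - fst c)^2 + (snd p + snd d - snd c)^2 =
        (a^2 + b^2) + 2 * (fst d * a + snd d * b) + ((fst d)^2 + (snd d)^2)"
    by (simp add: a_def b_def power2_eq_square algebra_simps)
  then have "2 * (fst d * a + snd d * b) = 0" using h0 h1 iso_dot[OF d] by (simp add: a_def b_def)
  then have "fst d * a + snd d * b = 0" by (simp del: distrib_left_numeral)
  from iso_param[OF d this] have "a = (- \<i> * a) * fst d" "b = (- \<i> * a) * snd d" .
  then have "a^2 + b^2 = (- \<i> * a)^2 * ((fst d)^2 + (snd d)^2)"
    by (metis (no_types) distrib_left power_mult_distrib)
  then have "a^2 + b^2 = 0" using iso_dot[OF d] by simp
  then show False using h0 r by (simp add: a_def b_def)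
qed

theorem mainTheorem14:
  fixes X :: "(complex \<times> complex) set"
  assumes "irred_curve X"
  shows "(zdim C2 (Sigma_inf X) = 1 \<longleftrightarrow> (line_dir (\<i>, -1) X \<or> line_dir (\<i>, 1) X))
    \<and> ((line_dir (\<i>, -1) X \<or> line_dir (\<i>, 1) X) \<longrightarrow> Sigma_inf X = X)
    \<and> (zdim C2 (Sigma_inf X) = 0 \<longleftrightarrow> (\<exists>c r. r \<noteq> 0 \<and> X = circle c r))
    \<and> (\<forall>c r. r \<noteq> 0 \<and> X = circle c r \<longrightarrow> Sigma_inf X = {c})
    \<and> (\<not> (line_dir (\<i>, -1) X \<or> line_dir (\<i>, 1) X) \<and> \<not> (\<exists>c r. r \<noteq> 0 \<and> X = circle c r)
         \<longrightarrow> Sigma_inf X = {})"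
proof -
  have dim: "zdim C2 X = 1" using assms by (simp add: irred_curve_def)
  have iso1: "iso (\<i>, -1)" and iso2: "iso (\<i>, 1)" by (simp_all add: iso_def)
  have lineS: "Sigma_inf X = X" if "line_dir (\<i>, -1) X \<or> line_dir (\<i>, 1) X"
  proof -
    from that obtain p d where "iso d" "X = lineset p d"
      unfolding line_dir_iff using iso1 iso2 by blast
    then show ?thesis using line_case assms by blast
  qed
  have lineNC: "\<not> (\<exists>c r. r \<noteq> 0 \<and> X = circle c r)" if "line_dir (\<i>, -1) X \<or> line_dir (\<i>, 1) X"
  proof -
    from that obtain p d where "iso d" "X = lineset p d"
      unfolding line_dir_iff using iso1 iso2 by blast
    then show ?thesis using circle_not_line by metis
  qed
  have circS: "Sigma_inf X = {c}" if "r \<noteq> 0" "X = circle c r" for c r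
    using circle_case[of r c] that assms by simp
  have z0: "zdim C2 {c} = 0" for c :: "complex \<times> complex" by (rule zdim_finite) auto
  have noneS: "Sigma_inf X = {}"
    if "\<not> (line_dir (\<i>, -1) X \<or> line_dir (\<i>, 1) X)" "\<not> (\<exists>c r. r \<noteq> 0 \<and> X = circle c r)"
  proof -
    have "u \<notin> Sigma_inf X" for u
    proof
      assume "u \<in> Sigma_inf X"
      then have "zdim C2 (ED_fiber X u) \<ge> 1" by (simp add: Sigma_inf_def)
      from general_case[OF assms this] that show False by blast
    qed
    then show ?thesis by blast
  qed
  show ?thesis
  proof (cases "line_dir (\<i>, -1) X \<or> line_dir (\<i>, 1) X")
    case True
    then show ?thesis using lineS lineNC dim by auto
  next
    case nl: False
    show ?thesis
    proof (cases "\<exists>c r. r \<noteq> 0 \<and> X = circle c r")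
      case True
      then obtain c r where cr: "r \<noteq> 0" "X = circle c r" by blast
      then have "Sigma_inf X = {c}" using circS by blast
      then show ?thesis using nl True circS z0 by auto
    next
      case False
      then show ?thesis using nl noneS[OF nl False] False by (auto simp: zdim_empty)
    qed
  qed
qed


end
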